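(* Let $r\ge2$, $\ell\ge2$. There is a ring isomorphism $\rho:\widehat{\mathcal{T}}_{2\ell}(A_{2r+1})\to\widetilde{\mathcal{T}}_\ell(C_r)$ determined by (for $u\in\frac12\mathbb{Z}$): $S^{(a)}_m(u)\mapsto T^{(a)}_m(u)$ ($1\le a\le r-1$, $1\le m\le 2\ell-1$); $S^{(r)}_{2m}(u)\mapsto T^{(r)}_m(u-\frac12)T^{(r)}_m(u+\frac12)$ ($1\le m\le\ell-1$); $S^{(r)}_{2m+1}(u)\mapsto T^{(r)}_m(u)T^{(r)}_{m+1}(u)$ ($0\le m\le\ell-1$); $S^{(r+1)}_{2m}(u)\mapsto T^{(r)}_m(u)^2$ ($1\le m\le\ell-1$); and $\rho(S^{(a)}_m(u))=(-1)^m\rho(S^{(2r+2-a)}_m(u))$ for $r+2\le a\le 2r+1$; here $T^{(r)}_0(u)=1$.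
   Context: $\widetilde{\mathcal{T}}_\ell(C_r)$ is the commutative ring with generators $T^{(a)}_m(u)^{\pm1}$ ($1\le a\le r-1$, $1\le m\le 2\ell-1$; $a=r$, $1\le m\le\ell-1$; $u\in\frac12\mathbb{Z}$) and $T^{(r)}_\ell(u)$ ($u\in\frac12\mathbb{Z}$), with relations, for all $u$: $T^{(a)}_m(u-\frac12)T^{(a)}_m(u+\frac12)=T^{(a)}_{m-1}(u)T^{(a)}_{m+1}(u)+T^{(a-1)}_m(u)T^{(a+1)}_m(u)$ ($1\le a\le r-2$, $1\le m\le2\ell-1$); $T^{(r-1)}_{2m}(u-\frac12)T^{(r-1)}_{2m}(u+\frac12)=T^{(r-1)}_{2m-1}(u)T^{(r-1)}_{2m+1}(u)+T^{(r-2)}_{2m}(u)T^{(r)}_m(u-\frac12)T^{(r)}_m(u+\frac12)$ ($1\le m\le\ell-1$); $T^{(r-1)}_{2m+1}(u-\frac12)T^{(r-1)}_{2m+1}(u+\frac12)=T^{(r-1)}_{2m}(u)T^{(r-1)}_{2m+2}(u)+T^{(r-2)}_{2m+1}(u)T^{(r)}_m(u)T^{(r)}_{m+1}(u)$ ($0\le m\le\ell-1$); $T^{(r)}_m(u-1)T^{(r)}_m(u+1)=T^{(r)}_{m-1}(u)T^{(r)}_{m+1}(u)+T^{(r-1)}_{2m}(u)$ ($1\le m\le\ell-1$); with $T^{(0)}_m=T^{(a)}_0=1$, $T^{(a)}_{2\ell}=1$ ($a\le r-1$) on right sides, and $T^{(r)}_\ell(u)^2=1$, $T^{(r)}_\ell(u+1)=T^{(r)}_\ell(u)$.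 $\widehat{\mathcal{T}}_{2\ell}(A_{2r+1})$ is the commutative ring with generators $S^{(a)}_m(u)^{\pm1}$ ($1\le a\le2r+1$, $1\le m\le2\ell-1$, $u\in\frac12\mathbb{Z}$, excluding $a=r+1$ with $m$ odd), where one sets $S^{(r+1)}_m(u)=0$ for odd $m$, with relations: $S^{(a)}_m(u-\frac12)S^{(a)}_m(u+\frac12)=S^{(a)}_{m-1}(u)S^{(a)}_{m+1}(u)+S^{(a-1)}_m(u)S^{(a+1)}_m(u)$ for all $1\le a\le2r+1$, $1\le m\le2\ell-1$, $u\in\frac12\mathbb{Z}$; $S^{(a)}_m(u)=(-1)^mS^{(2r+2-a)}_m(u)$; and on right sides $S^{(a)}_0(u)=S^{(a)}_{2\ell}(u)=S^{(0)}_m(u)=1$, $S^{(2r+2)}_m(u)=(-1)^m$. *)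

theory Defs
  imports "HOL-Algebra.QuotRing"
begin

datatype 'g rexp = RGen 'g | RInv 'g | RZero | ROne
  | RAdd "'g rexp" "'g rexp" | RNeg "'g rexp" | RMul "'g rexp" "'g rexp"

inductive pcong :: "'g set \<Rightarrow> 'g set \<Rightarrow> ('g rexp \<times> 'g rexp) set \<Rightarrow> 'g rexp \<Rightarrow> 'g rexp \<Rightarrow> bool"
  for gens invs rels where
  rc_refl: "pcong gens invs rels e e"
| rc_sym: "pcong gens invs rels e f \<Longrightarrow> pcong gens invs rels f e"
| rc_trans: "pcong gens invs rels e f \<Longrightarrow> pcong gens invs rels f h \<Longrightarrow> pcong gens invs rels e h"
| rc_add: "pcong gens invs rels e e' \<Longrightarrow> pcong gens invs rels f f' \<Longrightarrow>
    pcong gens invs rels (RAdd e f) (RAdd e' f')"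
| rc_neg: "pcong gens invs rels e e' \<Longrightarrow> pcong gens invs rels (RNeg e) (RNeg e')"
| rc_mul: "pcong gens invs rels e e' \<Longrightarrow> pcong gens invs rels f f' \<Longrightarrow>
    pcong gens invs rels (RMul e f) (RMul e' f')"
| rc_add_assoc: "pcong gens invs rels (RAdd (RAdd e f) h) (RAdd e (RAdd f h))"
| rc_add_comm: "pcong gens invs rels (RAdd e f) (RAdd f e)"
| rc_add_zero: "pcong gens invs rels (RAdd RZero e) e"
| rc_add_neg: "pcong gens invs rels (RAdd (RNeg e) e) RZero"
| rc_mul_assoc: "pcong gens invs rels (RMul (RMul e f) h) (RMul e (RMul f h))"
| rc_mul_comm: "pcong gens invs rels (RMul e f) (RMul f e)"
| rc_mul_one: "pcong gens invs rels (RMul ROne e) e"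
| rc_distrib: "pcong gens invs rels (RMul e (RAdd f h)) (RAdd (RMul e f) (RMul e h))"
| rc_inv: "g \<in> invs \<Longrightarrow> pcong gens invs rels (RMul (RGen g) (RInv g)) ROne"
| rc_nongen: "g \<notin> gens \<Longrightarrow> pcong gens invs rels (RGen g) RZero"
| rc_noninv: "g \<notin> invs \<Longrightarrow> pcong gens invs rels (RInv g) RZero"
| rc_rel: "(e, f) \<in> rels \<Longrightarrow> pcong gens invs rels e f"

definition rclass :: "'g set \<Rightarrow> 'g set \<Rightarrow> ('g rexp \<times> 'g rexp) set \<Rightarrow> 'g rexp \<Rightarrow> 'g rexp set" where
  "rclass gens invs rels e = {f. pcong gens invs rels e f}"

definition rrep :: "'g rexp set \<Rightarrow> 'g rexp" where
  "rrep X = (SOME e. e \<in> X)"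

definition pres_ring :: "'g set \<Rightarrow> 'g set \<Rightarrow> ('g rexp \<times> 'g rexp) set \<Rightarrow> ('g rexp set) ring" where
  "pres_ring gens invs rels =
    \<lparr>carrier = range (rclass gens invs rels),
     mult = (\<lambda>X Y. rclass gens invs rels (RMul (rrep X) (rrep Y))),
     one = rclass gens invs rels ROne,
     zero = rclass gens invs rels RZero,
     add = (\<lambda>X Y. rclass gens invs rels (RAdd (rrep X) (rrep Y)))\<rparr>"

text \<open>Generators are triples \<open>(a, m, k)\<close> of integers standing for
\<open>T^(a)_m(u)\<close> with spectral parameter \<open>u = k/2 \<in> \<frac>12\<int>\<close>.\<close>

definition gens_T :: "int \<Rightarrow> int \<Rightarrow> (int \<times> int \<times> int) set" where
  "gens_T r l = {(a, m, k). (1 \<le> a \<and> a \<le> r - 1 \<and> 1 \<le> m \<and> m \<le> 2*l - 1)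
                          \<or> (a = r \<and> 1 \<le> m \<and> m \<le> l)}"

definition invs_T :: "int \<Rightarrow> int \<Rightarrow> (int \<times> int \<times> int) set" where
  "invs_T r l = {(a, m, k). (1 \<le> a \<and> a \<le> r - 1 \<and> 1 \<le> m \<and> m \<le> 2*l - 1)
                          \<or> (a = r \<and> 1 \<le> m \<and> m \<le> l - 1)}"

definition tT :: "int \<Rightarrow> int \<Rightarrow> int \<Rightarrow> int \<Rightarrow> int \<Rightarrow> (int \<times> int \<times> int) rexp" where
  "tT r l a m k = (if a = 0 \<or> m = 0 \<or> (a \<le> r - 1 \<and> m = 2*l) then ROne else RGen (a, m, k))"

definition rels_T :: "int \<Rightarrow> int \<Rightarrow> ((int \<times> int \<times> int) rexp \<times> (int \<times> int \<times> int) rexp) set" where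
  "rels_T r l =
     {(RMul (tT r l a m (k-1)) (tT r l a m (k+1)),
       RAdd (RMul (tT r l a (m-1) k) (tT r l a (m+1) k))
            (RMul (tT r l (a-1) m k) (tT r l (a+1) m k))) | a m k.
        1 \<le> a \<and> a \<le> r - 2 \<and> 1 \<le> m \<and> m \<le> 2*l - 1}
   \<union> {(RMul (tT r l (r-1) (2*m) (k-1)) (tT r l (r-1) (2*m) (k+1)),
       RAdd (RMul (tT r l (r-1) (2*m-1) k) (tT r l (r-1) (2*m+1) k))
            (RMul (tT r l (r-2) (2*m) k) (RMul (tT r l r m (k-1)) (tT r l r m (k+1))))) | m k.
        1 \<le> m \<and> m \<le> l - 1}
   \<union> {(RMul (tT r l (r-1) (2*m+1) (k-1)) (tT r l (r-1) (2*m+1) (k+1)),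
       RAdd (RMul (tT r l (r-1) (2*m) k) (tT r l (r-1) (2*m+2) k))
            (RMul (tT r l (r-2) (2*m+1) k) (RMul (tT r l r m k) (tT r l r (m+1) k)))) | m k.
        0 \<le> m \<and> m \<le> l - 1}
   \<union> {(RMul (tT r l r m (k-2)) (tT r l r m (k+2)),
       RAdd (RMul (tT r l r (m-1) k) (tT r l r (m+1) k)) (tT r l (r-1) (2*m) k)) | m k.
        1 \<le> m \<and> m \<le> l - 1}
   \<union> {(RMul (tT r l r l k) (tT r l r l k), ROne) | k. True}
   \<union> {(tT r l r l (k+2), tT r l r l k) | k. True}"

definition ring_T :: "int \<Rightarrow> int \<Rightarrow> ((int \<times> int \<times> int) rexp set) ring" where
  "ring_T r l = pres_ring (gens_T r l) (invs_T r l) (rels_T r l)"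

definition cls_T :: "int \<Rightarrow> int \<Rightarrow> (int \<times> int \<times> int) rexp \<Rightarrow> (int \<times> int \<times> int) rexp set" where
  "cls_T r l = rclass (gens_T r l) (invs_T r l) (rels_T r l)"

definition gens_S :: "int \<Rightarrow> int \<Rightarrow> (int \<times> int \<times> int) set" where
  "gens_S r l = {(a, m, k). 1 \<le> a \<and> a \<le> 2*r + 1 \<and> 1 \<le> m \<and> m \<le> 2*l - 1
                           \<and> \<not> (a = r + 1 \<and> odd m)}"

definition rsign :: "int \<Rightarrow> 'g rexp" where
  "rsign m = (if even m then ROne else RNeg ROne)"

definition sS :: "int \<Rightarrow> int \<Rightarrow> int \<Rightarrow> int \<Rightarrow> int \<Rightarrow> (int \<times> int \<times> int) rexp" where
  "sS r l a m k = (if a = 0 \<or> m = 0 \<or> m = 2*l then ROne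
                   else if a = 2*r + 2 then rsign m
                   else if a = r + 1 \<and> odd m then RZero
                   else RGen (a, m, k))"

definition rels_S :: "int \<Rightarrow> int \<Rightarrow> ((int \<times> int \<times> int) rexp \<times> (int \<times> int \<times> int) rexp) set" where
  "rels_S r l =
     {(RMul (sS r l a m (k-1)) (sS r l a m (k+1)),
       RAdd (RMul (sS r l a (m-1) k) (sS r l a (m+1) k))
            (RMul (sS r l (a-1) m k) (sS r l (a+1) m k))) | a m k.
        1 \<le> a \<and> a \<le> 2*r + 1 \<and> 1 \<le> m \<and> m \<le> 2*l - 1}
   \<union> {(sS r l a m k, RMul (rsign m) (sS r l (2*r + 2 - a) m k)) | a m k.
        1 \<le> a \<and> a \<le> 2*r + 1 \<and> 1 \<le> m \<and> m \<le> 2*l - 1}"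

definition ring_S :: "int \<Rightarrow> int \<Rightarrow> ((int \<times> int \<times> int) rexp set) ring" where
  "ring_S r l = pres_ring (gens_S r l) (gens_S r l) (rels_S r l)"

definition cls_S :: "int \<Rightarrow> int \<Rightarrow> (int \<times> int \<times> int) rexp \<Rightarrow> (int \<times> int \<times> int) rexp set" where
  "cls_S r l = rclass (gens_S r l) (gens_S r l) (rels_S r l)"

end

theory Submission
  imports Defs
begin

lemma pc_eq_iff: "rclass G I Rl e = rclass G I Rl f \<longleftrightarrow> pcong G I Rl e f"
proof
  assume "rclass G I Rl e = rclass G I Rl f"
  moreover have "f \<in> rclass G I Rl f" by (simp add: rclass_def rc_refl)
  ultimately have "f \<in> rclass G I Rl e" by simp
  thus "pcong G I Rl e f" by (simp add: rclass_def)
next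
  assume h: "pcong G I Rl e f"
  show "rclass G I Rl e = rclass G I Rl f"
    unfolding rclass_def using h by (auto intro: rc_trans rc_sym)
qed

lemma rrep_cl: "pcong G I Rl e (rrep (rclass G I Rl e))"
proof -
  have "e \<in> rclass G I Rl e" by (simp add: rclass_def rc_refl)
  hence "rrep (rclass G I Rl e) \<in> rclass G I Rl e" unfolding rrep_def by (rule someI)
  thus ?thesis by (simp add: rclass_def)
qed

lemma cl_rrep: "rclass G I Rl (rrep (rclass G I Rl e)) = rclass G I Rl e"
  by (simp add: pc_eq_iff rrep_cl rc_sym)

lemma pr_carrier: "carrier (pres_ring G I Rl) = range (rclass G I Rl)"
  by (simp add: pres_ring_def)
lemma pr_one: "\<one>\<^bsub>pres_ring G I Rl\<^esub> = rclass G I Rl ROne"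
  by (simp add: pres_ring_def)
lemma pr_zero: "\<zero>\<^bsub>pres_ring G I Rl\<^esub> = rclass G I Rl RZero"
  by (simp add: pres_ring_def)
lemma pr_mult: "rclass G I Rl e \<otimes>\<^bsub>pres_ring G I Rl\<^esub> rclass G I Rl f = rclass G I Rl (RMul e f)"
  by (simp add: pres_ring_def pc_eq_iff rc_mul rrep_cl rc_sym)
lemma pr_add: "rclass G I Rl e \<oplus>\<^bsub>pres_ring G I Rl\<^esub> rclass G I Rl f = rclass G I Rl (RAdd e f)"
  by (simp add: pres_ring_def pc_eq_iff rc_add rrep_cl rc_sym)

lemma cl_ax:
  "rclass G I Rl (RAdd (RAdd e f) h) = rclass G I Rl (RAdd e (RAdd f h))"
  "rclass G I Rl (RAdd e f) = rclass G I Rl (RAdd f e)"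
  "rclass G I Rl (RAdd RZero e) = rclass G I Rl e"
  "rclass G I Rl (RAdd (RNeg e) e) = rclass G I Rl RZero"
  "rclass G I Rl (RMul (RMul e f) h) = rclass G I Rl (RMul e (RMul f h))"
  "rclass G I Rl (RMul e f) = rclass G I Rl (RMul f e)"
  "rclass G I Rl (RMul ROne e) = rclass G I Rl e"
  by (simp_all add: pc_eq_iff pcong.intros)

lemma pr_cring: "cring (pres_ring G I Rl)"
proof (rule cringI)
  show "abelian_group (pres_ring G I Rl)"
  proof (rule abelian_groupI)
    fix x assume "x \<in> carrier (pres_ring G I Rl)"
    then obtain e where "x = rclass G I Rl e" by (auto simp: pr_carrier)
    thus "\<exists>y\<in>carrier (pres_ring G I Rl). y \<oplus>\<^bsub>pres_ring G I Rl\<^esub> x = \<zero>\<^bsub>pres_ring G I Rl\<^esub>"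
      by (intro bexI[of _ "rclass G I Rl (RNeg e)"]) (simp_all add: pr_carrier pr_add pr_zero cl_ax(4))
  qed (clarsimp simp: pr_carrier pr_add pr_zero; metis cl_ax)+
  show "comm_monoid (pres_ring G I Rl)"
    by (rule comm_monoidI)
      (clarsimp simp: pr_carrier pr_mult pr_one; metis cl_ax)+
  fix x y z assume "x \<in> carrier (pres_ring G I Rl)" "y \<in> carrier (pres_ring G I Rl)"
    "z \<in> carrier (pres_ring G I Rl)"
  then obtain e f h where "x = rclass G I Rl e" "y = rclass G I Rl f" "z = rclass G I Rl h"
    by (auto simp: pr_carrier)
  moreover have "pcong G I Rl (RMul (RAdd e f) h) (RAdd (RMul e h) (RMul f h))"
    by (meson rc_add rc_distrib rc_mul_comm rc_trans)
  ultimately show "(x \<oplus>\<^bsub>pres_ring G I Rl\<^esub> y) \<otimes>\<^bsub>pres_ring G I Rl\<^esub> z =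
    x \<otimes>\<^bsub>pres_ring G I Rl\<^esub> z \<oplus>\<^bsub>pres_ring G I Rl\<^esub> y \<otimes>\<^bsub>pres_ring G I Rl\<^esub> z"
    by (simp add: pr_add pr_mult pc_eq_iff)
qed

lemma pr_neg: "\<ominus>\<^bsub>pres_ring G I Rl\<^esub> rclass G I Rl e = rclass G I Rl (RNeg e)"
proof -
  interpret cring "pres_ring G I Rl" by (rule pr_cring)
  show ?thesis
    by (rule minus_equality) (auto simp: pr_carrier pr_add pr_zero pc_eq_iff rc_add_neg)
qed

lemma cl_RMul: "rclass G I Rl (RMul e f) = rclass G I Rl e \<otimes>\<^bsub>pres_ring G I Rl\<^esub> rclass G I Rl f"
  by (simp add: pr_mult)
lemma cl_RAdd: "rclass G I Rl (RAdd e f) = rclass G I Rl e \<oplus>\<^bsub>pres_ring G I Rl\<^esub> rclass G I Rl f"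
  by (simp add: pr_add)
lemma cl_RNeg: "rclass G I Rl (RNeg e) = \<ominus>\<^bsub>pres_ring G I Rl\<^esub> rclass G I Rl e"
  by (simp add: pr_neg)
lemma cl_ROne: "rclass G I Rl ROne = \<one>\<^bsub>pres_ring G I Rl\<^esub>"
  by (simp add: pr_one)
lemma cl_RZero: "rclass G I Rl RZero = \<zero>\<^bsub>pres_ring G I Rl\<^esub>"
  by (simp add: pr_zero)
lemma cl_carrier: "rclass G I Rl e \<in> carrier (pres_ring G I Rl)"
  by (simp add: pr_carrier)

lemmas cl_simps = cl_RMul cl_RAdd cl_RNeg cl_ROne cl_RZero

lemma cl_rel: "(e, f) \<in> Rl \<Longrightarrow> rclass G I Rl e = rclass G I Rl f"
  by (simp add: pc_eq_iff rc_rel)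
lemma cl_inv: "g \<in> I \<Longrightarrow> rclass G I Rl (RGen g) \<otimes>\<^bsub>pres_ring G I Rl\<^esub> rclass G I Rl (RInv g) = \<one>\<^bsub>pres_ring G I Rl\<^esub>"
  by (simp add: pr_mult pr_one pc_eq_iff rc_inv)

fun hmap :: "('g \<Rightarrow> 'h rexp) \<Rightarrow> ('g \<Rightarrow> 'h rexp) \<Rightarrow> 'g rexp \<Rightarrow> 'h rexp" where
  "hmap Gm Im (RGen g) = Gm g"
| "hmap Gm Im (RInv g) = Im g"
| "hmap Gm Im RZero = RZero"
| "hmap Gm Im ROne = ROne"
| "hmap Gm Im (RAdd e f) = RAdd (hmap Gm Im e) (hmap Gm Im f)"
| "hmap Gm Im (RNeg e) = RNeg (hmap Gm Im e)"
| "hmap Gm Im (RMul e f) = RMul (hmap Gm Im e) (hmap Gm Im f)"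

lemma hmap_resp:
  assumes inv: "\<And>g. g \<in> I1 \<Longrightarrow> pcong G2 I2 R2 (RMul (Gm g) (Im g)) ROne"
    and ng: "\<And>g. g \<notin> G1 \<Longrightarrow> pcong G2 I2 R2 (Gm g) RZero"
    and ni: "\<And>g. g \<notin> I1 \<Longrightarrow> pcong G2 I2 R2 (Im g) RZero"
    and rl: "\<And>e f. (e, f) \<in> R1 \<Longrightarrow> pcong G2 I2 R2 (hmap Gm Im e) (hmap Gm Im f)"
  shows "pcong G1 I1 R1 e f \<Longrightarrow> pcong G2 I2 R2 (hmap Gm Im e) (hmap Gm Im f)"
  by (induction rule: pcong.induct)
     (auto intro: pcong.intros inv ng ni rl)



declare cl_carrier[simp]

definition itT :: "int \<Rightarrow> int \<Rightarrow> int \<Rightarrow> int \<Rightarrow> (int \<times> int \<times> int) rexp" where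
  "itT r l j k = (if j = 0 then ROne else if j = l then RGen (r, l, k) else RInv (r, j, k))"

definition G0 :: "int \<Rightarrow> int \<Rightarrow> int \<Rightarrow> int \<Rightarrow> int \<Rightarrow> (int \<times> int \<times> int) rexp" where
  "G0 r l a m k = (if a \<le> r - 1 then tT r l a m k
     else if a = r then (if even m then RMul (tT r l r (m div 2) (k-1)) (tT r l r (m div 2) (k+1))
                         else RMul (tT r l r ((m-1) div 2) k) (tT r l r ((m+1) div 2) k))
     else RMul (tT r l r (m div 2) k) (tT r l r (m div 2) k))"

definition I0 :: "int \<Rightarrow> int \<Rightarrow> int \<Rightarrow> int \<Rightarrow> int \<Rightarrow> (int \<times> int \<times> int) rexp" where
  "I0 r l a m k = (if a \<le> r - 1 then RInv (a, m, k)
     else if a = r then (if even m then RMul (itT r l (m div 2) (k-1)) (itT r l (m div 2) (k+1))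
                         else RMul (itT r l ((m-1) div 2) k) (itT r l ((m+1) div 2) k))
     else RMul (itT r l (m div 2) k) (itT r l (m div 2) k))"

definition Gphi :: "int \<Rightarrow> int \<Rightarrow> int \<times> int \<times> int \<Rightarrow> (int \<times> int \<times> int) rexp" where
  "Gphi r l g = (case g of (a, m, k) \<Rightarrow> if (a, m, k) \<in> gens_S r l then
      (if a \<le> r + 1 then G0 r l a m k else RMul (rsign m) (G0 r l (2*r+2-a) m k)) else RZero)"

definition Iphi :: "int \<Rightarrow> int \<Rightarrow> int \<times> int \<times> int \<Rightarrow> (int \<times> int \<times> int) rexp" where
  "Iphi r l g = (case g of (a, m, k) \<Rightarrow> if (a, m, k) \<in> gens_S r l then
      (if a \<le> r + 1 then I0 r l a m k else RMul (rsign m) (I0 r l (2*r+2-a) m k)) else RZero)"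

lemma hmap_rsign[simp]: "hmap Gm Im (rsign m) = rsign m"
  by (simp add: rsign_def)

locale P68 =
  fixes r l :: int
  assumes r2: "2 \<le> r" and l2: "2 \<le> l"
begin

abbreviation "RT \<equiv> pres_ring (gens_T r l) (invs_T r l) (rels_T r l)"
abbreviation "clT \<equiv> rclass (gens_T r l) (invs_T r l) (rels_T r l)"
abbreviation "RS \<equiv> pres_ring (gens_S r l) (gens_S r l) (rels_S r l)"
abbreviation "clS \<equiv> rclass (gens_S r l) (gens_S r l) (rels_S r l)"

sublocale T: cring RT by (rule pr_cring)
sublocale S: cring RS by (rule pr_cring)

abbreviation "tv a m k \<equiv> clT (tT r l a m k)"
abbreviation "iv j k \<equiv> clT (itT r l j k)"
abbreviation "phi \<equiv> hmap (Gphi r l) (Iphi r l)"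
abbreviation "Phi a m k \<equiv> clT (phi (sS r l a m k))"

lemma clT_carr: "clT e \<in> carrier RT" by simp
lemma clS_carr: "clS e \<in> carrier RS" by simp

lemma sgnT_even: "even m \<Longrightarrow> clT (rsign m) = \<one>\<^bsub>RT\<^esub>"
  by (simp add: rsign_def cl_simps)
lemma sgnT_odd: "odd m \<Longrightarrow> clT (rsign m) = \<ominus>\<^bsub>RT\<^esub> \<one>\<^bsub>RT\<^esub>"
  by (simp add: rsign_def cl_simps)

lemma tv_triv: "a = 0 \<or> m = 0 \<or> (a \<le> r - 1 \<and> m = 2*l) \<Longrightarrow> tv a m k = \<one>\<^bsub>RT\<^esub>"
  by (simp add: tT_def cl_simps)
lemma tv_gen: "\<not> (a = 0 \<or> m = 0 \<or> (a \<le> r - 1 \<and> m = 2*l)) \<Longrightarrow> tT r l a m k = RGen (a, m, k)"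
  by (simp add: tT_def)

lemma relT1:
  assumes "1 \<le> a" "a \<le> r - 2" "1 \<le> m" "m \<le> 2*l - 1"
  shows "tv a m (k-1) \<otimes>\<^bsub>RT\<^esub> tv a m (k+1) = tv a (m-1) k \<otimes>\<^bsub>RT\<^esub> tv a (m+1) k \<oplus>\<^bsub>RT\<^esub> tv (a-1) m k \<otimes>\<^bsub>RT\<^esub> tv (a+1) m k"
proof -
  have "(RMul (tT r l a m (k-1)) (tT r l a m (k+1)),
       RAdd (RMul (tT r l a (m-1) k) (tT r l a (m+1) k))
            (RMul (tT r l (a-1) m k) (tT r l (a+1) m k))) \<in> rels_T r l"
    unfolding rels_T_def using assms by blast
  from cl_rel[OF this] show ?thesis by (simp add: cl_simps)
qed

lemma relT2:
  assumes "1 \<le> m" "m \<le> l - 1"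
  shows "tv (r-1) (2*m) (k-1) \<otimes>\<^bsub>RT\<^esub> tv (r-1) (2*m) (k+1) = tv (r-1) (2*m-1) k \<otimes>\<^bsub>RT\<^esub> tv (r-1) (2*m+1) k \<oplus>\<^bsub>RT\<^esub> tv (r-2) (2*m) k \<otimes>\<^bsub>RT\<^esub> (tv r m (k-1) \<otimes>\<^bsub>RT\<^esub> tv r m (k+1))"
proof -
  have "(RMul (tT r l (r-1) (2*m) (k-1)) (tT r l (r-1) (2*m) (k+1)),
       RAdd (RMul (tT r l (r-1) (2*m-1) k) (tT r l (r-1) (2*m+1) k))
            (RMul (tT r l (r-2) (2*m) k) (RMul (tT r l r m (k-1)) (tT r l r m (k+1))))) \<in> rels_T r l"
    unfolding rels_T_def using assms by blast
  from cl_rel[OF this] show ?thesis by (simp add: cl_simps)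
qed

lemma relT3:
  assumes "0 \<le> m" "m \<le> l - 1"
  shows "tv (r-1) (2*m+1) (k-1) \<otimes>\<^bsub>RT\<^esub> tv (r-1) (2*m+1) (k+1) = tv (r-1) (2*m) k \<otimes>\<^bsub>RT\<^esub> tv (r-1) (2*m+2) k \<oplus>\<^bsub>RT\<^esub> tv (r-2) (2*m+1) k \<otimes>\<^bsub>RT\<^esub> (tv r m k \<otimes>\<^bsub>RT\<^esub> tv r (m+1) k)"
proof -
  have "(RMul (tT r l (r-1) (2*m+1) (k-1)) (tT r l (r-1) (2*m+1) (k+1)),
       RAdd (RMul (tT r l (r-1) (2*m) k) (tT r l (r-1) (2*m+2) k))
            (RMul (tT r l (r-2) (2*m+1) k) (RMul (tT r l r m k) (tT r l r (m+1) k)))) \<in> rels_T r l"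
    unfolding rels_T_def using assms by blast
  from cl_rel[OF this] show ?thesis by (simp add: cl_simps)
qed

lemma relT4:
  assumes "1 \<le> m" "m \<le> l - 1"
  shows "tv r m (k-2) \<otimes>\<^bsub>RT\<^esub> tv r m (k+2) = tv r (m-1) k \<otimes>\<^bsub>RT\<^esub> tv r (m+1) k \<oplus>\<^bsub>RT\<^esub> tv (r-1) (2*m) k"
proof -
  have "(RMul (tT r l r m (k-2)) (tT r l r m (k+2)),
       RAdd (RMul (tT r l r (m-1) k) (tT r l r (m+1) k)) (tT r l (r-1) (2*m) k)) \<in> rels_T r l"
    unfolding rels_T_def using assms by blast
  from cl_rel[OF this] show ?thesis by (simp add: cl_simps)
qed

lemma relT5: "tv r l k \<otimes>\<^bsub>RT\<^esub> tv r l k = \<one>\<^bsub>RT\<^esub>"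
proof -
  have "(RMul (tT r l r l k) (tT r l r l k), ROne) \<in> rels_T r l"
    unfolding rels_T_def by blast
  from cl_rel[OF this] show ?thesis by (simp add: cl_simps)
qed

lemma relT6: "tv r l (k+2) = tv r l k"
proof -
  have "(tT r l r l (k+2), tT r l r l k) \<in> rels_T r l"
    unfolding rels_T_def by blast
  from cl_rel[OF this] show ?thesis .
qed

lemma Tl_pm: "tv r l (k-1) \<otimes>\<^bsub>RT\<^esub> tv r l (k+1) = \<one>\<^bsub>RT\<^esub>"
proof -
  have "tv r l (k+1) = tv r l (k-1)" using relT6[of "k-1"] by (simp add: algebra_simps)
  thus ?thesis using relT5[of "k-1"] by simp
qed

lemma T_iT: "0 \<le> j \<Longrightarrow> j \<le> l \<Longrightarrow> tv r j k \<otimes>\<^bsub>RT\<^esub> iv j k = \<one>\<^bsub>RT\<^esub>"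
proof -
  assume j: "0 \<le> j" "j \<le> l"
  consider "j = 0" | "j = l" | "1 \<le> j" "j \<le> l - 1" using j by linarith
  thus ?thesis
  proof cases
    case 1 thus ?thesis by (simp add: itT_def tT_def cl_simps)
  next
    case 2 thus ?thesis using relT5[of k] r2 l2 by (simp add: itT_def tT_def)
  next
    case 3
    hence "(r, j, k) \<in> invs_T r l" by (simp add: invs_T_def)
    from cl_inv[OF this] show ?thesis using 3 r2 by (simp add: itT_def tT_def)
  qed
qed

end


context P68 begin

lemma gens_S_iff: "(a, m, k) \<in> gens_S r l \<longleftrightarrow> 1 \<le> a \<and> a \<le> 2*r+1 \<and> 1 \<le> m \<and> m \<le> 2*l-1 \<and> \<not> (a = r+1 \<and> odd m)"
  by (simp add: gens_S_def)

lemma sS_gen: "1 \<le> a \<Longrightarrow> a \<le> 2*r+1 \<Longrightarrow> 1 \<le> m \<Longrightarrow> m \<le> 2*l-1 \<Longrightarrow> \<not> (a = r+1 \<and> odd m) \<Longrightarrow>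
   sS r l a m k = RGen (a, m, k)"
  by (simp add: sS_def)

lemma sS_one: "a = 0 \<or> m = 0 \<or> m = 2*l \<Longrightarrow> sS r l a m k = ROne"
  by (simp add: sS_def)

lemma Phi_one: "a = 0 \<or> m = 0 \<or> m = 2*l \<Longrightarrow> Phi a m k = \<one>\<^bsub>RT\<^esub>"
  by (simp add: sS_one cl_simps)

lemma Phi_gen: "1 \<le> a \<Longrightarrow> a \<le> 2*r+1 \<Longrightarrow> 1 \<le> m \<Longrightarrow> m \<le> 2*l-1 \<Longrightarrow> \<not> (a = r+1 \<and> odd m) \<Longrightarrow>
   Phi a m k = clT (if a \<le> r + 1 then G0 r l a m k else RMul (rsign m) (G0 r l (2*r+2-a) m k))"
  by (simp add: sS_gen Gphi_def gens_S_iff)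

lemma Phi_a: "0 \<le> a \<Longrightarrow> a \<le> r-1 \<Longrightarrow> 0 \<le> m \<Longrightarrow> m \<le> 2*l \<Longrightarrow> Phi a m k = tv a m k"
proof -
  assume h: "0 \<le> a" "a \<le> r-1" "0 \<le> m" "m \<le> 2*l"
  show ?thesis
  proof (cases "a = 0 \<or> m = 0 \<or> m = 2*l")
    case True thus ?thesis using h by (simp add: Phi_one tv_triv)
  next
    case False thus ?thesis using h by (subst Phi_gen) (auto simp: G0_def)
  qed
qed

lemma div_helpers:
  "(2*j) div 2 = (j::int)" "(2*j+1-1) div 2 = j" "(2*j+1+1) div 2 = j + 1" "even (2*j)" "odd (2*j+1)"
  by auto

lemma Phi_r_even: "0 \<le> j \<Longrightarrow> j \<le> l \<Longrightarrow> Phi r (2*j) k = tv r j (k-1) \<otimes>\<^bsub>RT\<^esub> tv r j (k+1)"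
proof -
  assume h: "0 \<le> j" "j \<le> l"
  consider "j = 0" | "j = l" | "1 \<le> j" "j \<le> l - 1" using h by linarith
  thus ?thesis
  proof cases
    case 1 thus ?thesis by (simp add: Phi_one tv_triv)
  next
    case 2 thus ?thesis by (simp add: Phi_one Tl_pm)
  next
    case 3 thus ?thesis using r2 by (subst Phi_gen) (auto simp: G0_def cl_simps div_helpers add.commute)
  qed
qed

lemma Phi_r_odd: "0 \<le> j \<Longrightarrow> j \<le> l - 1 \<Longrightarrow> Phi r (2*j+1) k = tv r j k \<otimes>\<^bsub>RT\<^esub> tv r (j+1) k"
  using r2 by (subst Phi_gen) (auto simp: G0_def cl_simps div_helpers add.commute)

lemma Phi_r1_even: "0 \<le> j \<Longrightarrow> j \<le> l \<Longrightarrow> Phi (r+1) (2*j) k = tv r j k \<otimes>\<^bsub>RT\<^esub> tv r j k"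
proof -
  assume h: "0 \<le> j" "j \<le> l"
  consider "j = 0" | "j = l" | "1 \<le> j" "j \<le> l - 1" using h by linarith
  thus ?thesis
  proof cases
    case 1 thus ?thesis by (simp add: Phi_one tv_triv)
  next
    case 2 thus ?thesis by (simp add: Phi_one relT5)
  next
    case 3 thus ?thesis using r2 by (subst Phi_gen) (auto simp: G0_def cl_simps div_helpers add.commute)
  qed
qed

lemma Phi_r1_odd: "odd m \<Longrightarrow> 1 \<le> m \<Longrightarrow> m \<le> 2*l-1 \<Longrightarrow> Phi (r+1) m k = \<zero>\<^bsub>RT\<^esub>"
  using r2 by (simp add: sS_def cl_simps)

lemma Phi_mirror_hi:
  assumes "r+2 \<le> a" "a \<le> 2*r+2" "0 \<le> m" "m \<le> 2*l"
  shows "Phi a m k = clT (rsign m) \<otimes>\<^bsub>RT\<^esub> Phi (2*r+2-a) m k"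
proof -
  consider "m = 0 \<or> m = 2*l" | "\<not>(m = 0 \<or> m = 2*l)" "a = 2*r+2" | "\<not>(m = 0 \<or> m = 2*l)" "a \<le> 2*r+1"
    using assms by linarith
  thus ?thesis
  proof cases
    case 1 thus ?thesis by (auto simp: Phi_one sgnT_even)
  next
    case 2 thus ?thesis using assms r2 by (simp add: Phi_one) (simp add: sS_def)
  next
    case 3
    have "Phi a m k = clT (RMul (rsign m) (G0 r l (2*r+2-a) m k))"
      using 3 assms by (subst Phi_gen) auto
    moreover have "Phi (2*r+2-a) m k = clT (G0 r l (2*r+2-a) m k)"
      using 3 assms by (subst Phi_gen) auto
    ultimately show ?thesis by (simp add: cl_simps)
  qed
qed

lemma Phi_mirror:
  assumes "0 \<le> a" "a \<le> 2*r+2" "0 \<le> m" "m \<le> 2*l"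
  shows "Phi a m k = clT (rsign m) \<otimes>\<^bsub>RT\<^esub> Phi (2*r+2-a) m k"
proof -
  consider "r+2 \<le> a" | "a = r+1" | "a \<le> r" using assms by linarith
  thus ?thesis
  proof cases
    case 1 thus ?thesis using assms Phi_mirror_hi by blast
  next
    case 2
    show ?thesis
    proof (cases "even m")
      case True thus ?thesis using 2 by (simp add: sgnT_even)
    next
      case False
      hence "m \<noteq> 0" "m \<noteq> 2*l" by auto
      hence "1 \<le> m" "m \<le> 2*l - 1" using assms by auto
      thus ?thesis using 2 False by (simp add: Phi_r1_odd)
    qed
  next
    case 3
    have e: "Phi (2*r+2-a) m k = clT (rsign m) \<otimes>\<^bsub>RT\<^esub> Phi a m k"
      using Phi_mirror_hi[of "2*r+2-a" m k] 3 assms by simp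
    show ?thesis
    proof (cases "even m")
      case True thus ?thesis using e by (simp add: sgnT_even)
    next
      case False thus ?thesis using e by (simp add: sgnT_odd) (insert clT_carr, algebra)
    qed
  qed
qed

end

context P68 begin

lemma parity_cases: obtains j where "m = 2*j" | j where "m = (2*j+1::int)"
  by (metis oddE evenE)

lemma relPhi_low:
  assumes a: "1 \<le> a" "a \<le> r+1" and m: "1 \<le> m" "m \<le> 2*l-1"
  shows "Phi a m (k-1) \<otimes>\<^bsub>RT\<^esub> Phi a m (k+1) = Phi a (m-1) k \<otimes>\<^bsub>RT\<^esub> Phi a (m+1) k \<oplus>\<^bsub>RT\<^esub> Phi (a-1) m k \<otimes>\<^bsub>RT\<^esub> Phi (a+1) m k"
proof -
  consider "a \<le> r-2" | "a = r-1" | "a = r" | "a = r+1" using a by linarith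
  thus ?thesis
  proof cases
    case 1 thus ?thesis using a m by (simp add: Phi_a relT1)
  next
    case 2
    show ?thesis
    proof (cases rule: parity_cases[of m])
      case (1 j)
      hence j: "1 \<le> j" "j \<le> l - 1" using m by auto
      have "Phi (r-1) (2*j) (k-1) \<otimes>\<^bsub>RT\<^esub> Phi (r-1) (2*j) (k+1) = Phi (r-1) (2*j-1) k \<otimes>\<^bsub>RT\<^esub> Phi (r-1) (2*j+1) k \<oplus>\<^bsub>RT\<^esub> Phi (r-1-1) (2*j) k \<otimes>\<^bsub>RT\<^esub> Phi (r-1+1) (2*j) k"
        using j r2 relT2[of j k] by (simp add: Phi_a Phi_r_even)
      thus ?thesis using 1 2 by simp
    next
      case (2 j)
      hence j: "0 \<le> j" "j \<le> l - 1" using m by auto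
      have e: "tv (r-1) (2+2*j) k = tv (r-1) (2*j+2) k"
        by (simp add: add.commute)
      have "Phi (r-1) (2*j+1) (k-1) \<otimes>\<^bsub>RT\<^esub> Phi (r-1) (2*j+1) (k+1) = Phi (r-1) (2*j+1-1) k \<otimes>\<^bsub>RT\<^esub> Phi (r-1) (2*j+1+1) k \<oplus>\<^bsub>RT\<^esub> Phi (r-1-1) (2*j+1) k \<otimes>\<^bsub>RT\<^esub> Phi (r-1+1) (2*j+1) k"
        using j r2 relT3[of j k] by (simp add: Phi_a Phi_r_odd e)
      thus ?thesis using 2 \<open>a = r-1\<close> by simp
    qed
  next
    case 3
    show ?thesis
    proof (cases rule: parity_cases[of m])
      case (1 j)
      hence j: "1 \<le> j" "j \<le> l - 1" using m by auto
      have e1: "Phi r (2*j) (k-1) = tv r j (k-2) \<otimes>\<^bsub>RT\<^esub> tv r j k"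
        using j Phi_r_even[of j "k-1"] by (simp add: algebra_simps)
      have e2: "Phi r (2*j) (k+1) = tv r j k \<otimes>\<^bsub>RT\<^esub> tv r j (k+2)"
        using j Phi_r_even[of j "k+1"] by (simp add: algebra_simps)
      have e3: "Phi r (2*j-1) k = tv r (j-1) k \<otimes>\<^bsub>RT\<^esub> tv r j k"
        using j Phi_r_odd[of "j-1" k] by (simp add: algebra_simps)
      have e4: "Phi r (2*j+1) k = tv r j k \<otimes>\<^bsub>RT\<^esub> tv r (j+1) k"
        using j Phi_r_odd[of j k] by simp
      have e5: "Phi (r-1) (2*j) k = tv (r-1) (2*j) k" using j r2 by (simp add: Phi_a)
      have e6: "Phi (r+1) (2*j) k = tv r j k \<otimes>\<^bsub>RT\<^esub> tv r j k" using j by (simp add: Phi_r1_even)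
      have "Phi r (2*j) (k-1) \<otimes>\<^bsub>RT\<^esub> Phi r (2*j) (k+1) =
         (tv r j k \<otimes>\<^bsub>RT\<^esub> tv r j k) \<otimes>\<^bsub>RT\<^esub> (tv r j (k-2) \<otimes>\<^bsub>RT\<^esub> tv r j (k+2))"
        unfolding e1 e2 by (insert clT_carr, algebra)
      also have "\<dots> = (tv r j k \<otimes>\<^bsub>RT\<^esub> tv r j k) \<otimes>\<^bsub>RT\<^esub> (tv r (j-1) k \<otimes>\<^bsub>RT\<^esub> tv r (j+1) k \<oplus>\<^bsub>RT\<^esub> tv (r-1) (2*j) k)"
        using relT4[OF j, of k] by simp
      also have "\<dots> = Phi r (2*j-1) k \<otimes>\<^bsub>RT\<^esub> Phi r (2*j+1) k \<oplus>\<^bsub>RT\<^esub> Phi (r-1) (2*j) k \<otimes>\<^bsub>RT\<^esub> Phi (r+1) (2*j) k"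
        unfolding e3 e4 e5 e6 by (insert clT_carr, algebra)
      finally show ?thesis using 1 3 by simp
    next
      case (2 j)
      hence j: "0 \<le> j" "j \<le> l - 1" using m by auto
      have e1: "Phi r (2*j+1-1) k = tv r j (k-1) \<otimes>\<^bsub>RT\<^esub> tv r j (k+1)"
        using j Phi_r_even[of j k] by simp
      have e2: "Phi r (2*j+1+1) k = tv r (j+1) (k-1) \<otimes>\<^bsub>RT\<^esub> tv r (j+1) (k+1)"
        using j Phi_r_even[of "j+1" k] by (simp add: algebra_simps)
      have e3: "Phi (r+1) (2*j+1) k = \<zero>\<^bsub>RT\<^esub>" using j by (intro Phi_r1_odd) auto
      have "Phi r (2*j+1) (k-1) \<otimes>\<^bsub>RT\<^esub> Phi r (2*j+1) (k+1) = Phi r (2*j+1-1) k \<otimes>\<^bsub>RT\<^esub> Phi r (2*j+1+1) k \<oplus>\<^bsub>RT\<^esub> Phi (r-1) (2*j+1) k \<otimes>\<^bsub>RT\<^esub> Phi (r+1) (2*j+1) k"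
        unfolding e1 e2 e3 Phi_r_odd[OF j] by (insert clT_carr, algebra)
      thus ?thesis using 2 3 by simp
    qed
  next
    case 4
    show ?thesis
    proof (cases rule: parity_cases[of m])
      case (1 j)
      hence j: "1 \<le> j" "j \<le> l - 1" using m by auto
      have e1: "Phi (r+1) (2*j-1) k = \<zero>\<^bsub>RT\<^esub>" using j by (intro Phi_r1_odd) auto
      have e2: "Phi (r+1) (2*j+1) k = \<zero>\<^bsub>RT\<^esub>" using j by (intro Phi_r1_odd) auto
      have e3: "Phi (r+1+1) (2*j) k = Phi r (2*j) k"
        using j r2 Phi_mirror_hi[of "r+2" "2*j" k] by (simp add: sgnT_even algebra_simps)
      have "Phi (r+1) (2*j) (k-1) \<otimes>\<^bsub>RT\<^esub> Phi (r+1) (2*j) (k+1) = Phi (r+1) (2*j-1) k \<otimes>\<^bsub>RT\<^esub> Phi (r+1) (2*j+1) k \<oplus>\<^bsub>RT\<^esub> Phi (r+1-1) (2*j) k \<otimes>\<^bsub>RT\<^esub> Phi (r+1+1) (2*j) k"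
        unfolding e1 e2 e3 using j by (simp add: Phi_r1_even Phi_r_even) (insert clT_carr, algebra)
      thus ?thesis using 1 4 by simp
    next
      case (2 j)
      hence j: "0 \<le> j" "j \<le> l - 1" using m by auto
      have e1: "Phi (r+1) (2*j+1) k' = \<zero>\<^bsub>RT\<^esub>" for k' using j by (intro Phi_r1_odd) auto
      have e2: "Phi (r+1+1) (2*j+1) k = \<ominus>\<^bsub>RT\<^esub> \<one>\<^bsub>RT\<^esub> \<otimes>\<^bsub>RT\<^esub> Phi r (2*j+1) k"
        using j r2 Phi_mirror_hi[of "r+2" "2*j+1" k] by (simp add: sgnT_odd algebra_simps)
      have e3: "Phi (r+1) (2*j+1+1) k = tv r (j+1) k \<otimes>\<^bsub>RT\<^esub> tv r (j+1) k"
        using j Phi_r1_even[of "j+1" k] by (simp add: algebra_simps)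
      have "Phi (r+1) (2*j+1) (k-1) \<otimes>\<^bsub>RT\<^esub> Phi (r+1) (2*j+1) (k+1) = Phi (r+1) (2*j+1-1) k \<otimes>\<^bsub>RT\<^esub> Phi (r+1) (2*j+1+1) k \<oplus>\<^bsub>RT\<^esub> Phi (r+1-1) (2*j+1) k \<otimes>\<^bsub>RT\<^esub> Phi (r+1+1) (2*j+1) k"
        unfolding e1 e2 e3 using j by (simp add: Phi_r1_even Phi_r_odd) (insert clT_carr, algebra)
      thus ?thesis using 2 4 by simp
    qed
  qed
qed

end 
context P68 begin

lemma sgnT_sq: "clT (rsign m) \<otimes>\<^bsub>RT\<^esub> clT (rsign m) = \<one>\<^bsub>RT\<^esub>"
  by (cases "even m") (simp_all add: sgnT_even sgnT_odd, insert clT_carr, algebra)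

lemma relPhi:
  assumes a: "1 \<le> a" "a \<le> 2*r+1" and m: "1 \<le> m" "m \<le> 2*l-1"
  shows "Phi a m (k-1) \<otimes>\<^bsub>RT\<^esub> Phi a m (k+1) = Phi a (m-1) k \<otimes>\<^bsub>RT\<^esub> Phi a (m+1) k \<oplus>\<^bsub>RT\<^esub> Phi (a-1) m k \<otimes>\<^bsub>RT\<^esub> Phi (a+1) m k"
proof (cases "a \<le> r+1")
  case True thus ?thesis using relPhi_low a m by blast
next
  case False
  define b where "b = 2*r+2-a"
  have b: "1 \<le> b" "b \<le> r" using False a unfolding b_def by auto
  have hb: "Phi b m (k-1) \<otimes>\<^bsub>RT\<^esub> Phi b m (k+1) = Phi b (m-1) k \<otimes>\<^bsub>RT\<^esub> Phi b (m+1) k \<oplus>\<^bsub>RT\<^esub> Phi (b-1) m k \<otimes>\<^bsub>RT\<^esub> Phi (b+1) m k"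
    using relPhi_low[of b m k] b m by simp
  have mi: "Phi a m' k' = clT (rsign m') \<otimes>\<^bsub>RT\<^esub> Phi b m' k'" if "0 \<le> m'" "m' \<le> 2*l" for m' k'
    using Phi_mirror_hi[of a m' k'] that False a unfolding b_def by simp
  have e1: "2*r+2-(a-1) = b+1" "2*r+2-(a+1) = b-1" unfolding b_def by simp_all
  have mim: "Phi (a-1) m k = clT (rsign m) \<otimes>\<^bsub>RT\<^esub> Phi (b+1) m k"
    using Phi_mirror[of "a-1" m k, unfolded e1] a m False by simp
  have mip: "Phi (a+1) m k = clT (rsign m) \<otimes>\<^bsub>RT\<^esub> Phi (b-1) m k"
    using Phi_mirror[of "a+1" m k, unfolded e1] a m False by simp
  have mi0: "Phi a m k' = clT (rsign m) \<otimes>\<^bsub>RT\<^esub> Phi b m k'" for k' using m by (intro mi) auto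
  have mi1: "Phi a (m-1) k = clT (rsign (m-1)) \<otimes>\<^bsub>RT\<^esub> Phi b (m-1) k" using m by (intro mi) auto
  have mi2: "Phi a (m+1) k = clT (rsign (m+1)) \<otimes>\<^bsub>RT\<^esub> Phi b (m+1) k" using m by (intro mi) auto
  have L: "Phi a m (k-1) \<otimes>\<^bsub>RT\<^esub> Phi a m (k+1) = Phi b m (k-1) \<otimes>\<^bsub>RT\<^esub> Phi b m (k+1)"
  proof -
    have "Phi a m (k-1) \<otimes>\<^bsub>RT\<^esub> Phi a m (k+1) = (clT (rsign m) \<otimes>\<^bsub>RT\<^esub> clT (rsign m)) \<otimes>\<^bsub>RT\<^esub> (Phi b m (k-1) \<otimes>\<^bsub>RT\<^esub> Phi b m (k+1))"
      unfolding mi0 by (insert clT_carr, algebra)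
    thus ?thesis by (simp add: sgnT_sq)
  qed
  have R: "Phi a (m-1) k \<otimes>\<^bsub>RT\<^esub> Phi a (m+1) k \<oplus>\<^bsub>RT\<^esub> Phi (a-1) m k \<otimes>\<^bsub>RT\<^esub> Phi (a+1) m k
      = Phi b (m-1) k \<otimes>\<^bsub>RT\<^esub> Phi b (m+1) k \<oplus>\<^bsub>RT\<^esub> Phi (b-1) m k \<otimes>\<^bsub>RT\<^esub> Phi (b+1) m k"
  proof (cases "even m")
    case True
    hence s: "clT (rsign m) = \<one>\<^bsub>RT\<^esub>" "clT (rsign (m-1)) = \<ominus>\<^bsub>RT\<^esub> \<one>\<^bsub>RT\<^esub>" "clT (rsign (m+1)) = \<ominus>\<^bsub>RT\<^esub> \<one>\<^bsub>RT\<^esub>"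
      by (simp_all add: sgnT_even sgnT_odd)
    show ?thesis unfolding mi1 mi2 mim mip s by (insert clT_carr, algebra)
  next
    case False
    hence s: "clT (rsign m) = \<ominus>\<^bsub>RT\<^esub> \<one>\<^bsub>RT\<^esub>" "clT (rsign (m-1)) = \<one>\<^bsub>RT\<^esub>" "clT (rsign (m+1)) = \<one>\<^bsub>RT\<^esub>"
      by (simp_all add: sgnT_even sgnT_odd)
    show ?thesis unfolding mi1 mi2 mim mip s by (insert clT_carr, algebra)
  qed
  show ?thesis using L R hb by simp
qed

lemma T_prod_inv:
  assumes "x \<otimes>\<^bsub>RT\<^esub> u = \<one>\<^bsub>RT\<^esub>" "y \<otimes>\<^bsub>RT\<^esub> v = \<one>\<^bsub>RT\<^esub>"
    "x \<in> carrier RT" "y \<in> carrier RT" "u \<in> carrier RT" "v \<in> carrier RT"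
  shows "(x \<otimes>\<^bsub>RT\<^esub> y) \<otimes>\<^bsub>RT\<^esub> (u \<otimes>\<^bsub>RT\<^esub> v) = \<one>\<^bsub>RT\<^esub>"
proof -
  have "(x \<otimes>\<^bsub>RT\<^esub> y) \<otimes>\<^bsub>RT\<^esub> (u \<otimes>\<^bsub>RT\<^esub> v) = (x \<otimes>\<^bsub>RT\<^esub> u) \<otimes>\<^bsub>RT\<^esub> (y \<otimes>\<^bsub>RT\<^esub> v)"
    using assms(3-6) by algebra
  thus ?thesis using assms(1,2) by simp
qed

lemma GI0:
  assumes g: "(a, m, k) \<in> gens_S r l" and a: "a \<le> r+1"
  shows "clT (G0 r l a m k) \<otimes>\<^bsub>RT\<^esub> clT (I0 r l a m k) = \<one>\<^bsub>RT\<^esub>"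
proof -
  have g': "1 \<le> a" "1 \<le> m" "m \<le> 2*l-1" "\<not> (a = r+1 \<and> odd m)" using g by (auto simp: gens_S_iff)
  consider "a \<le> r-1" | "a = r" | "a = r+1" using a by linarith
  thus ?thesis
  proof cases
    case 1
    hence "(a, m, k) \<in> invs_T r l" using g' by (simp add: invs_T_def)
    from cl_inv[OF this] show ?thesis using 1 g' by (simp add: G0_def I0_def tv_gen)
  next
    case 2
    show ?thesis
    proof (cases rule: parity_cases[of m])
      case (1 j)
      hence j: "1 \<le> j" "j \<le> l-1" using g' by auto
      show ?thesis using 1 2 j r2
        by (simp add: G0_def I0_def cl_simps div_helpers, intro T_prod_inv) (simp_all add: T_iT)
    next
      case (2 j)
      hence j: "0 \<le> j" "j \<le> l-1" using g' by auto
      show ?thesis using 2 \<open>a = r\<close> j r2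
        by (simp add: G0_def I0_def cl_simps div_helpers, intro T_prod_inv) (simp_all add: T_iT)
    qed
  next
    case 3
    then obtain j where j: "m = 2*j" using g' by (metis evenE)
    hence j': "1 \<le> j" "j \<le> l-1" using g' by auto
    show ?thesis using 3 j j' r2
      by (simp add: G0_def I0_def cl_simps div_helpers, intro T_prod_inv) (simp_all add: T_iT)
  qed
qed

lemma GI:
  assumes g: "(a, m, k) \<in> gens_S r l"
  shows "clT (Gphi r l (a, m, k)) \<otimes>\<^bsub>RT\<^esub> clT (Iphi r l (a, m, k)) = \<one>\<^bsub>RT\<^esub>"
proof (cases "a \<le> r+1")
  case True thus ?thesis using g GI0 by (simp add: Gphi_def Iphi_def)
next
  case False
  have "(2*r+2-a, m, k) \<in> gens_S r l" using g False by (auto simp: gens_S_iff)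
  from GI0[OF this] False have "clT (G0 r l (2*r+2-a) m k) \<otimes>\<^bsub>RT\<^esub> clT (I0 r l (2*r+2-a) m k) = \<one>\<^bsub>RT\<^esub>" by simp
  thus ?thesis using g False
    by (simp add: Gphi_def Iphi_def cl_simps, intro T_prod_inv) (simp_all add: sgnT_sq)
qed

lemma phi_rel:
  assumes "(e, f) \<in> rels_S r l" shows "clT (phi e) = clT (phi f)"
proof -
  from assms consider (1) a m k where
      "e = RMul (sS r l a m (k-1)) (sS r l a m (k+1))"
      "f = RAdd (RMul (sS r l a (m-1) k) (sS r l a (m+1) k)) (RMul (sS r l (a-1) m k) (sS r l (a+1) m k))"
      "1 \<le> a" "a \<le> 2*r + 1" "1 \<le> m" "m \<le> 2*l - 1"
    | (2) a m k where "e = sS r l a m k" "f = RMul (rsign m) (sS r l (2*r + 2 - a) m k)"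
      "1 \<le> a" "a \<le> 2*r + 1" "1 \<le> m" "m \<le> 2*l - 1"
    unfolding rels_S_def by blast
  thus ?thesis
  proof cases
    case 1 thus ?thesis by (simp add: cl_simps relPhi)
  next
    case 2 thus ?thesis by (simp add: cl_simps) (rule Phi_mirror; simp)
  qed
qed

lemma phi_resp: "pcong (gens_S r l) (gens_S r l) (rels_S r l) e f \<Longrightarrow>
   pcong (gens_T r l) (invs_T r l) (rels_T r l) (phi e) (phi f)"
proof (rule hmap_resp)
  fix g assume "g \<in> gens_S r l"
  thus "pcong (gens_T r l) (invs_T r l) (rels_T r l) (RMul (Gphi r l g) (Iphi r l g)) ROne"
    by (cases g) (simp add: pc_eq_iff[symmetric] cl_simps GI)
next
  fix g assume "g \<notin> gens_S r l"
  thus "pcong (gens_T r l) (invs_T r l) (rels_T r l) (Gphi r l g) RZero"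
    and "pcong (gens_T r l) (invs_T r l) (rels_T r l) (Iphi r l g) RZero"
    by (cases g, simp add: Gphi_def Iphi_def rc_refl)+
next
  fix e f assume "(e, f) \<in> rels_S r l"
  thus "pcong (gens_T r l) (invs_T r l) (rels_T r l) (phi e) (phi f)"
    by (simp add: pc_eq_iff[symmetric] phi_rel)
qed

end 

fun Pe :: "int \<Rightarrow> nat \<Rightarrow> int \<Rightarrow> (int \<times> int \<times> int) rexp"
and Qe :: "int \<Rightarrow> nat \<Rightarrow> int \<Rightarrow> (int \<times> int \<times> int) rexp" where
  "Pe r 0 k = ROne"
| "Pe r (Suc j) k = RMul (RGen (r, 2 * int j + 1, k)) (Qe r j k)"
| "Qe r 0 k = ROne"
| "Qe r (Suc j) k = RMul (RInv (r, 2 * int j + 1, k)) (Pe r j k)"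

definition Gpsi :: "int \<Rightarrow> int \<Rightarrow> int \<times> int \<times> int \<Rightarrow> (int \<times> int \<times> int) rexp" where
  "Gpsi r l g = (case g of (a, m, k) \<Rightarrow> if (a, m, k) \<in> gens_T r l then
      (if a = r then Pe r (nat m) k else RGen (a, m, k)) else RZero)"

definition Ipsi :: "int \<Rightarrow> int \<Rightarrow> int \<times> int \<times> int \<Rightarrow> (int \<times> int \<times> int) rexp" where
  "Ipsi r l g = (case g of (a, m, k) \<Rightarrow> if (a, m, k) \<in> invs_T r l then
      (if a = r then Qe r (nat m) k else RInv (a, m, k)) else RZero)"

context P68 begin

abbreviation "psi \<equiv> hmap (Gpsi r l) (Ipsi r l)"
abbreviation "Psi a m k \<equiv> clS (psi (tT r l a m k))"
abbreviation "sv a m k \<equiv> clS (sS r l a m k)"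
abbreviation "pv j k \<equiv> clS (Pe r j k)"
abbreviation "qv j k \<equiv> clS (Qe r j k)"

lemma sgnS_even: "even m \<Longrightarrow> clS (rsign m) = \<one>\<^bsub>RS\<^esub>"
  by (simp add: rsign_def cl_simps)
lemma sgnS_odd: "odd m \<Longrightarrow> clS (rsign m) = \<ominus>\<^bsub>RS\<^esub> \<one>\<^bsub>RS\<^esub>"
  by (simp add: rsign_def cl_simps)

lemma relS:
  assumes "1 \<le> a" "a \<le> 2*r + 1" "1 \<le> m" "m \<le> 2*l - 1"
  shows "sv a m (k-1) \<otimes>\<^bsub>RS\<^esub> sv a m (k+1) = sv a (m-1) k \<otimes>\<^bsub>RS\<^esub> sv a (m+1) k \<oplus>\<^bsub>RS\<^esub> sv (a-1) m k \<otimes>\<^bsub>RS\<^esub> sv (a+1) m k"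
proof -
  have "(RMul (sS r l a m (k-1)) (sS r l a m (k+1)),
       RAdd (RMul (sS r l a (m-1) k) (sS r l a (m+1) k))
            (RMul (sS r l (a-1) m k) (sS r l (a+1) m k))) \<in> rels_S r l"
    unfolding rels_S_def using assms by blast
  from cl_rel[OF this] show ?thesis by (simp add: cl_simps)
qed

lemma signS:
  assumes "1 \<le> a" "a \<le> 2*r + 1" "1 \<le> m" "m \<le> 2*l - 1"
  shows "sv a m k = clS (rsign m) \<otimes>\<^bsub>RS\<^esub> sv (2*r + 2 - a) m k"
proof -
  have "(sS r l a m k, RMul (rsign m) (sS r l (2*r + 2 - a) m k)) \<in> rels_S r l"
    unfolding rels_S_def using assms by blast
  from cl_rel[OF this] show ?thesis by (simp add: cl_simps)
qed

lemma sv_gen: "1 \<le> a \<Longrightarrow> a \<le> 2*r+1 \<Longrightarrow> 1 \<le> m \<Longrightarrow> m \<le> 2*l-1 \<Longrightarrow> \<not> (a = r+1 \<and> odd m) \<Longrightarrow>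
   sv a m k = clS (RGen (a, m, k))"
  by (simp add: sS_gen)
lemma sv_one: "a = 0 \<or> m = 0 \<or> m = 2*l \<Longrightarrow> sv a m k = \<one>\<^bsub>RS\<^esub>"
  by (simp add: sS_one cl_simps)
lemma sv_r1_odd: "odd m \<Longrightarrow> 1 \<le> m \<Longrightarrow> m \<le> 2*l-1 \<Longrightarrow> sv (r+1) m k = \<zero>\<^bsub>RS\<^esub>"
  using r2 by (simp add: sS_def cl_simps)
lemma S_inv: "g \<in> gens_S r l \<Longrightarrow> clS (RGen g) \<otimes>\<^bsub>RS\<^esub> clS (RInv g) = \<one>\<^bsub>RS\<^esub>"
  by (rule cl_inv)

lemma S_prod_inv:
  assumes "x \<otimes>\<^bsub>RS\<^esub> u = \<one>\<^bsub>RS\<^esub>" "y \<otimes>\<^bsub>RS\<^esub> v = \<one>\<^bsub>RS\<^esub>"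
    "x \<in> carrier RS" "y \<in> carrier RS" "u \<in> carrier RS" "v \<in> carrier RS"
  shows "(x \<otimes>\<^bsub>RS\<^esub> y) \<otimes>\<^bsub>RS\<^esub> (u \<otimes>\<^bsub>RS\<^esub> v) = \<one>\<^bsub>RS\<^esub>"
proof -
  have "(x \<otimes>\<^bsub>RS\<^esub> y) \<otimes>\<^bsub>RS\<^esub> (u \<otimes>\<^bsub>RS\<^esub> v) = (x \<otimes>\<^bsub>RS\<^esub> u) \<otimes>\<^bsub>RS\<^esub> (y \<otimes>\<^bsub>RS\<^esub> v)"
    using assms(3-6) by algebra
  thus ?thesis using assms(1,2) by simp
qed

lemma gen_r_odd: "int j + 1 \<le> l \<Longrightarrow> (r, 2 * int j + 1, k) \<in> gens_S r l"
  using r2 by (simp add: gens_S_iff)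

lemma pq: "int j \<le> l \<Longrightarrow> pv j k \<otimes>\<^bsub>RS\<^esub> qv j k = \<one>\<^bsub>RS\<^esub>"
proof (induction j)
  case 0 thus ?case by (simp add: cl_simps)
next
  case (Suc j)
  hence h: "int j + 1 \<le> l" by simp
  have "pv j k \<otimes>\<^bsub>RS\<^esub> qv j k = \<one>\<^bsub>RS\<^esub>" using Suc by simp
  hence q: "qv j k \<otimes>\<^bsub>RS\<^esub> pv j k = \<one>\<^bsub>RS\<^esub>" using S.m_comm by simp
  show ?case using S_inv[OF gen_r_odd[OF h]] q
    by (simp add: cl_simps, intro S_prod_inv) simp_all
qed

lemma pp_odd: "int j + 1 \<le> l \<Longrightarrow> pv j k \<otimes>\<^bsub>RS\<^esub> pv (Suc j) k = sv r (2 * int j + 1) k"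
proof -
  assume h: "int j + 1 \<le> l"
  have "pv j k \<otimes>\<^bsub>RS\<^esub> pv (Suc j) k = clS (RGen (r, 2 * int j + 1, k)) \<otimes>\<^bsub>RS\<^esub> (pv j k \<otimes>\<^bsub>RS\<^esub> qv j k)"
    by (simp add: cl_simps) (insert clS_carr, algebra)
  also have "\<dots> = sv r (2 * int j + 1) k" using pq[of j k] h r2 by (simp add: sv_gen)
  finally show ?thesis .
qed

lemma Xlem: "int j \<le> l \<Longrightarrow> pv j (k-1) \<otimes>\<^bsub>RS\<^esub> pv j (k+1) = sv r (2 * int j) k"
proof (induction j arbitrary: k)
  case 0 thus ?case by (simp add: cl_simps sv_one)
next
  case (Suc j)
  hence h: "int j + 1 \<le> l" by simp
  have e1: "2 * int j + 1 - 1 = 2 * int j" "2 * int j + 1 + 1 = 2 * int (Suc j)" by simp_all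
  have rel: "sv r (2*int j+1) (k-1) \<otimes>\<^bsub>RS\<^esub> sv r (2*int j+1) (k+1) = sv r (2 * int j) k \<otimes>\<^bsub>RS\<^esub> sv r (2 * int (Suc j)) k"
    using relS[of r "2*int j+1" k, unfolded e1] sv_r1_odd[of "2*int j+1" k] h r2 by simp
  have g: "sv r (2*int j+1) k' = clS (RGen (r, 2 * int j + 1, k'))" for k'
    using h r2 by (simp add: sv_gen)
  have IH: "pv j (k-1) \<otimes>\<^bsub>RS\<^esub> pv j (k+1) = sv r (2 * int j) k" using Suc h by simp
  have "pv (Suc j) (k-1) \<otimes>\<^bsub>RS\<^esub> pv (Suc j) (k+1) =
     (sv r (2*int j+1) (k-1) \<otimes>\<^bsub>RS\<^esub> sv r (2*int j+1) (k+1)) \<otimes>\<^bsub>RS\<^esub> (qv j (k-1) \<otimes>\<^bsub>RS\<^esub> qv j (k+1))"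
    unfolding g by (simp add: cl_simps) (insert clS_carr, algebra)
  also have "\<dots> = sv r (2 * int (Suc j)) k \<otimes>\<^bsub>RS\<^esub> ((pv j (k-1) \<otimes>\<^bsub>RS\<^esub> qv j (k-1)) \<otimes>\<^bsub>RS\<^esub> (pv j (k+1) \<otimes>\<^bsub>RS\<^esub> qv j (k+1)))"
    unfolding rel IH[symmetric] by (insert clS_carr, algebra)
  also have "\<dots> = sv r (2 * int (Suc j)) k" using pq h by simp
  finally show ?case .
qed

lemma Ylem: "int j \<le> l \<Longrightarrow> pv j k \<otimes>\<^bsub>RS\<^esub> pv j k = sv (r+1) (2 * int j) k"
proof (induction j)
  case 0 thus ?case by (simp add: cl_simps sv_one)
next
  case (Suc j)
  hence h: "int j + 1 \<le> l" by simp
  have e1: "2 * int j + 1 - 1 = 2 * int j" "2 * int j + 1 + 1 = 2 * int (Suc j)" "r + 1 - 1 = r" by simp_all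
  define G where "G = clS (RGen (r, 2 * int j + 1, k))"
  have g: "sv r (2*int j+1) k = G" using h r2 by (simp add: sv_gen G_def)
  have s2: "sv (r+1+1) (2*int j+1) k = \<ominus>\<^bsub>RS\<^esub> \<one>\<^bsub>RS\<^esub> \<otimes>\<^bsub>RS\<^esub> G"
  proof -
    have "sv (r+1+1) (2*int j+1) k = clS (rsign (2*int j+1)) \<otimes>\<^bsub>RS\<^esub> sv (2*r+2-(r+1+1)) (2*int j+1) k"
      using h r2 by (intro signS) auto
    thus ?thesis using g by (simp add: sgnS_odd)
  qed
  have rel: "\<zero>\<^bsub>RS\<^esub> = sv (r+1) (2 * int j) k \<otimes>\<^bsub>RS\<^esub> sv (r+1) (2 * int (Suc j)) k \<oplus>\<^bsub>RS\<^esub> G \<otimes>\<^bsub>RS\<^esub> (\<ominus>\<^bsub>RS\<^esub> \<one>\<^bsub>RS\<^esub> \<otimes>\<^bsub>RS\<^esub> G)"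
    using relS[of "r+1" "2*int j+1" k, unfolded e1 s2 g] sv_r1_odd[of "2*int j+1"] h r2 by simp
  have A: "sv (r+1) (2 * int j) k \<otimes>\<^bsub>RS\<^esub> sv (r+1) (2 * int (Suc j)) k = G \<otimes>\<^bsub>RS\<^esub> G"
  proof -
    have "sv (r+1) (2 * int j) k \<otimes>\<^bsub>RS\<^esub> sv (r+1) (2 * int (Suc j)) k =
      (sv (r+1) (2 * int j) k \<otimes>\<^bsub>RS\<^esub> sv (r+1) (2 * int (Suc j)) k \<oplus>\<^bsub>RS\<^esub> G \<otimes>\<^bsub>RS\<^esub> (\<ominus>\<^bsub>RS\<^esub> \<one>\<^bsub>RS\<^esub> \<otimes>\<^bsub>RS\<^esub> G)) \<oplus>\<^bsub>RS\<^esub> G \<otimes>\<^bsub>RS\<^esub> G"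
      unfolding G_def by (insert clS_carr, algebra)
    from this[unfolded rel[symmetric]] show ?thesis unfolding G_def by simp
  qed
  have IH: "pv j k \<otimes>\<^bsub>RS\<^esub> pv j k = sv (r+1) (2 * int j) k" using Suc h by simp
  have "pv (Suc j) k \<otimes>\<^bsub>RS\<^esub> pv (Suc j) k = (G \<otimes>\<^bsub>RS\<^esub> G) \<otimes>\<^bsub>RS\<^esub> (qv j k \<otimes>\<^bsub>RS\<^esub> qv j k)"
    unfolding G_def by (simp add: cl_simps) (insert clS_carr, algebra)
  also have "\<dots> = sv (r+1) (2 * int (Suc j)) k \<otimes>\<^bsub>RS\<^esub> ((pv j k \<otimes>\<^bsub>RS\<^esub> qv j k) \<otimes>\<^bsub>RS\<^esub> (pv j k \<otimes>\<^bsub>RS\<^esub> qv j k))"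
    unfolding A[symmetric] IH[symmetric] by (insert clS_carr, algebra)
  also have "\<dots> = sv (r+1) (2 * int (Suc j)) k" using pq h by simp
  finally show ?case .
qed

end

context P68 begin

lemma Psi_a: "0 \<le> a \<Longrightarrow> a \<le> r-1 \<Longrightarrow> 0 \<le> m \<Longrightarrow> m \<le> 2*l \<Longrightarrow> Psi a m k = sv a m k"
proof -
  assume h: "0 \<le> a" "a \<le> r-1" "0 \<le> m" "m \<le> 2*l"
  show ?thesis
  proof (cases "a = 0 \<or> m = 0 \<or> m = 2*l")
    case True thus ?thesis using h by (auto simp: tT_def sS_def)
  next
    case False
    hence "(a, m, k) \<in> gens_T r l" using h by (auto simp: gens_T_def)
    thus ?thesis using False h by (simp add: tv_gen sS_gen Gpsi_def)
  qed
qed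

lemma Psi_r: "0 \<le> j \<Longrightarrow> j \<le> l \<Longrightarrow> Psi r j k = pv (nat j) k"
proof -
  assume h: "0 \<le> j" "j \<le> l"
  show ?thesis
  proof (cases "j = 0")
    case True thus ?thesis by (simp add: tT_def)
  next
    case False
    hence "(r, j, k) \<in> gens_T r l" using h by (auto simp: gens_T_def)
    thus ?thesis using False h r2 by (simp add: tv_gen Gpsi_def)
  qed
qed

lemma X': "0 \<le> j \<Longrightarrow> j \<le> l \<Longrightarrow> pv (nat j) (k-1) \<otimes>\<^bsub>RS\<^esub> pv (nat j) (k+1) = sv r (2 * j) k"
  using Xlem[of "nat j" k] by simp
lemma Y': "0 \<le> j \<Longrightarrow> j \<le> l \<Longrightarrow> pv (nat j) k \<otimes>\<^bsub>RS\<^esub> pv (nat j) k = sv (r+1) (2 * j) k"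
  using Ylem[of "nat j" k] by simp
lemma pp_odd': "0 \<le> j \<Longrightarrow> j + 1 \<le> l \<Longrightarrow> pv (nat j) k \<otimes>\<^bsub>RS\<^esub> pv (nat (j+1)) k = sv r (2 * j + 1) k"
proof -
  assume h: "0 \<le> j" "j + 1 \<le> l"
  have "nat (j+1) = Suc (nat j)" using h by simp
  thus ?thesis using pp_odd[of "nat j" k] h by simp
qed

lemma GI_psi:
  assumes g: "(a, m, k) \<in> invs_T r l"
  shows "clS (Gpsi r l (a, m, k)) \<otimes>\<^bsub>RS\<^esub> clS (Ipsi r l (a, m, k)) = \<one>\<^bsub>RS\<^esub>"
proof (cases "a = r")
  case True
  hence "1 \<le> m" "m \<le> l - 1" using g r2 by (auto simp: invs_T_def)
  moreover have "(a, m, k) \<in> gens_T r l" using g by (auto simp: invs_T_def gens_T_def)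
  ultimately show ?thesis using g True pq[of "nat m" k] by (simp add: Gpsi_def Ipsi_def)
next
  case False
  hence h: "1 \<le> a" "a \<le> r - 1" "1 \<le> m" "m \<le> 2*l - 1" using g by (auto simp: invs_T_def)
  moreover have "(a, m, k) \<in> gens_T r l" using g by (auto simp: invs_T_def gens_T_def)
  moreover have "(a, m, k) \<in> gens_S r l" using h by (simp add: gens_S_iff)
  ultimately show ?thesis using g False S_inv[of "(a,m,k)"] by (simp add: Gpsi_def Ipsi_def)
qed

lemma psi_rel:
  assumes "(e, f) \<in> rels_T r l" shows "clS (psi e) = clS (psi f)"
proof -
  from assms consider
     (1) a m k where "e = RMul (tT r l a m (k-1)) (tT r l a m (k+1))"
       "f = RAdd (RMul (tT r l a (m-1) k) (tT r l a (m+1) k)) (RMul (tT r l (a-1) m k) (tT r l (a+1) m k))"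
       "1 \<le> a" "a \<le> r - 2" "1 \<le> m" "m \<le> 2*l - 1"
   | (2) m k where "e = RMul (tT r l (r-1) (2*m) (k-1)) (tT r l (r-1) (2*m) (k+1))"
       "f = RAdd (RMul (tT r l (r-1) (2*m-1) k) (tT r l (r-1) (2*m+1) k))
            (RMul (tT r l (r-2) (2*m) k) (RMul (tT r l r m (k-1)) (tT r l r m (k+1))))"
       "1 \<le> m" "m \<le> l - 1"
   | (3) m k where "e = RMul (tT r l (r-1) (2*m+1) (k-1)) (tT r l (r-1) (2*m+1) (k+1))"
       "f = RAdd (RMul (tT r l (r-1) (2*m) k) (tT r l (r-1) (2*m+2) k))
            (RMul (tT r l (r-2) (2*m+1) k) (RMul (tT r l r m k) (tT r l r (m+1) k)))"
       "0 \<le> m" "m \<le> l - 1"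
   | (4) m k where "e = RMul (tT r l r m (k-2)) (tT r l r m (k+2))"
       "f = RAdd (RMul (tT r l r (m-1) k) (tT r l r (m+1) k)) (tT r l (r-1) (2*m) k)"
       "1 \<le> m" "m \<le> l - 1"
   | (5) k where "e = RMul (tT r l r l k) (tT r l r l k)" "f = ROne"
   | (6) k where "e = tT r l r l (k+2)" "f = tT r l r l k"
    unfolding rels_T_def by blast
  thus ?thesis
  proof cases
    case 1 thus ?thesis using relS[of a m k] r2 by (simp add: cl_simps Psi_a)
  next
    case 2 thus ?thesis using relS[of "r-1" "2*m" k] X'[of m k] r2 by (simp add: cl_simps Psi_a Psi_r)
  next
    case 3 thus ?thesis using relS[of "r-1" "2*m+1" k] pp_odd'[of m k] r2 by (simp add: cl_simps Psi_a Psi_r add.commute)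
  next
    case 4
    define A where "A = pv (nat m) (k-2)"
    define B where "B = pv (nat m) k"
    define C where "C = pv (nat m) (k+2)"
    define D where "D = pv (nat (m-1)) k"
    define E where "E = pv (nat (m+1)) k"
    define F where "F = sv (r-1) (2*m) k"
    define Q where "Q = qv (nat m) k"
    have BQ: "B \<otimes>\<^bsub>RS\<^esub> Q = \<one>\<^bsub>RS\<^esub>" unfolding B_def Q_def using pq[of "nat m" k] 4 by simp
    have x1: "A \<otimes>\<^bsub>RS\<^esub> B = sv r (2*m) (k-1)" unfolding A_def B_def
      using X'[of m "k-1"] 4 by simp
    have x2: "B \<otimes>\<^bsub>RS\<^esub> C = sv r (2*m) (k+1)" unfolding C_def B_def
      using X'[of m "k+1"] 4 by (simp add: add.commute)
    have x3: "D \<otimes>\<^bsub>RS\<^esub> B = sv r (2*m-1) k" unfolding D_def B_def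
      using pp_odd'[of "m-1" k] 4 by simp
    have x4: "B \<otimes>\<^bsub>RS\<^esub> E = sv r (2*m+1) k" unfolding E_def B_def
      using pp_odd'[of m k] 4 by simp
    have x5: "B \<otimes>\<^bsub>RS\<^esub> B = sv (r+1) (2*m) k" unfolding B_def using Y'[of m k] 4 by simp
    have rel: "(A \<otimes>\<^bsub>RS\<^esub> B) \<otimes>\<^bsub>RS\<^esub> (B \<otimes>\<^bsub>RS\<^esub> C) = (D \<otimes>\<^bsub>RS\<^esub> B) \<otimes>\<^bsub>RS\<^esub> (B \<otimes>\<^bsub>RS\<^esub> E) \<oplus>\<^bsub>RS\<^esub> F \<otimes>\<^bsub>RS\<^esub> (B \<otimes>\<^bsub>RS\<^esub> B)"
      unfolding x1 x2 x3 x4 x5 F_def using relS[of r "2*m" k] 4 r2 by simp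
    have cs: "A \<in> carrier RS" "B \<in> carrier RS" "C \<in> carrier RS" "D \<in> carrier RS" "E \<in> carrier RS"
      "F \<in> carrier RS" "Q \<in> carrier RS"
      unfolding A_def B_def C_def D_def E_def F_def Q_def by simp_all
    have "A \<otimes>\<^bsub>RS\<^esub> C = (A \<otimes>\<^bsub>RS\<^esub> C) \<otimes>\<^bsub>RS\<^esub> ((B \<otimes>\<^bsub>RS\<^esub> Q) \<otimes>\<^bsub>RS\<^esub> (B \<otimes>\<^bsub>RS\<^esub> Q))"
      using cs by (simp add: BQ)
    also have "\<dots> = ((A \<otimes>\<^bsub>RS\<^esub> B) \<otimes>\<^bsub>RS\<^esub> (B \<otimes>\<^bsub>RS\<^esub> C)) \<otimes>\<^bsub>RS\<^esub> (Q \<otimes>\<^bsub>RS\<^esub> Q)"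
      using cs by algebra
    also have "\<dots> = ((D \<otimes>\<^bsub>RS\<^esub> B) \<otimes>\<^bsub>RS\<^esub> (B \<otimes>\<^bsub>RS\<^esub> E) \<oplus>\<^bsub>RS\<^esub> F \<otimes>\<^bsub>RS\<^esub> (B \<otimes>\<^bsub>RS\<^esub> B)) \<otimes>\<^bsub>RS\<^esub> (Q \<otimes>\<^bsub>RS\<^esub> Q)"
      unfolding rel ..
    also have "\<dots> = (D \<otimes>\<^bsub>RS\<^esub> E \<oplus>\<^bsub>RS\<^esub> F) \<otimes>\<^bsub>RS\<^esub> ((B \<otimes>\<^bsub>RS\<^esub> Q) \<otimes>\<^bsub>RS\<^esub> (B \<otimes>\<^bsub>RS\<^esub> Q))"
      using cs by algebra
    also have "\<dots> = D \<otimes>\<^bsub>RS\<^esub> E \<oplus>\<^bsub>RS\<^esub> F" using cs by (simp add: BQ)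
    finally have main: "A \<otimes>\<^bsub>RS\<^esub> C = D \<otimes>\<^bsub>RS\<^esub> E \<oplus>\<^bsub>RS\<^esub> F" .
    show ?thesis using main 4 r2
      by (simp add: cl_simps Psi_a Psi_r A_def B_def C_def D_def E_def F_def)
  next
    case 5 thus ?thesis using Y'[of l k] l2 by (simp add: cl_simps Psi_r sv_one)
  next
    case 6
    have a: "pv (nat l) k \<otimes>\<^bsub>RS\<^esub> pv (nat l) (k+2) = \<one>\<^bsub>RS\<^esub>"
      using X'[of l "k+1"] l2 by (simp add: sv_one add.commute)
    have b: "pv (nat l) k \<otimes>\<^bsub>RS\<^esub> pv (nat l) k = \<one>\<^bsub>RS\<^esub>"
      using Y'[of l k] l2 by (simp add: sv_one)
    have "pv (nat l) (k+2) = (pv (nat l) k \<otimes>\<^bsub>RS\<^esub> pv (nat l) k) \<otimes>\<^bsub>RS\<^esub> pv (nat l) (k+2)"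
      unfolding b by simp
    also have "\<dots> = pv (nat l) k \<otimes>\<^bsub>RS\<^esub> (pv (nat l) k \<otimes>\<^bsub>RS\<^esub> pv (nat l) (k+2))"
      by (insert clS_carr, algebra)
    also have "\<dots> = pv (nat l) k" unfolding a by simp
    finally show ?thesis using 6 l2 by (simp add: Psi_r)
  qed
qed

lemma psi_resp: "pcong (gens_T r l) (invs_T r l) (rels_T r l) e f \<Longrightarrow>
   pcong (gens_S r l) (gens_S r l) (rels_S r l) (psi e) (psi f)"
proof (rule hmap_resp)
  fix g assume "g \<in> invs_T r l"
  thus "pcong (gens_S r l) (gens_S r l) (rels_S r l) (RMul (Gpsi r l g) (Ipsi r l g)) ROne"
    by (cases g) (simp add: pc_eq_iff[symmetric] cl_simps GI_psi)
next
  fix g assume "g \<notin> gens_T r l"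
  thus "pcong (gens_S r l) (gens_S r l) (rels_S r l) (Gpsi r l g) RZero"
    by (cases g, simp add: Gpsi_def rc_refl)
next
  fix g assume "g \<notin> invs_T r l"
  thus "pcong (gens_S r l) (gens_S r l) (rels_S r l) (Ipsi r l g) RZero"
    by (cases g, simp add: Ipsi_def rc_refl)
next
  fix e f assume "(e, f) \<in> rels_T r l"
  thus "pcong (gens_S r l) (gens_S r l) (rels_S r l) (psi e) (psi f)"
    by (simp add: pc_eq_iff[symmetric] psi_rel)
qed

end

context P68 begin

lemma RT1_low:
  assumes g: "(a, m, k) \<in> gens_S r l" and a: "a \<le> r+1"
  shows "clS (psi (G0 r l a m k)) = clS (RGen (a, m, k))"
proof -
  have g': "1 \<le> a" "1 \<le> m" "m \<le> 2*l-1" "\<not> (a = r+1 \<and> odd m)" using g by (auto simp: gens_S_iff)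
  consider "a \<le> r-1" | "a = r" | "a = r+1" using a by linarith
  thus ?thesis
  proof cases
    case 1 thus ?thesis using g' r2 by (simp add: G0_def Psi_a sv_gen)
  next
    case 2
    show ?thesis
    proof (cases rule: parity_cases[of m])
      case (1 j)
      hence j: "1 \<le> j" "j \<le> l-1" using g' by auto
      thus ?thesis using 1 2 r2 X'[of j k] by (simp add: G0_def cl_simps div_helpers Psi_r sv_gen)
    next
      case (2 j)
      hence j: "0 \<le> j" "j \<le> l-1" using g' by auto
      thus ?thesis using 2 \<open>a = r\<close> r2 pp_odd'[of j k]
        by (simp add: G0_def cl_simps div_helpers Psi_r sv_gen add.commute)
    qed
  next
    case 3
    then obtain j where j: "m = 2*j" using g' by (metis evenE)
    hence j': "1 \<le> j" "j \<le> l-1" using g' by auto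
    show ?thesis using 3 j j' r2 Y'[of j k] by (simp add: G0_def cl_simps div_helpers Psi_r sv_gen)
  qed
qed

lemma RT1: "g \<in> gens_S r l \<Longrightarrow> clS (psi (Gphi r l g)) = clS (RGen g)"
proof -
  assume g: "g \<in> gens_S r l"
  obtain a m k where gg: "g = (a, m, k)" by (cases g)
  show ?thesis
  proof (cases "a \<le> r+1")
    case True thus ?thesis using g gg RT1_low by (simp add: Gphi_def)
  next
    case False
    have h: "1 \<le> a" "a \<le> 2*r+1" "1 \<le> m" "m \<le> 2*l-1" using g gg by (auto simp: gens_S_iff)
    have b: "(2*r+2-a, m, k) \<in> gens_S r l" using g gg False by (auto simp: gens_S_iff)
    have "clS (psi (G0 r l (2*r+2-a) m k)) = sv (2*r+2-a) m k"
      using RT1_low[OF b] b False by (simp add: sv_gen gens_S_iff)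
    moreover have "sv a m k = clS (RGen (a, m, k))" using h False by (simp add: sv_gen)
    ultimately show ?thesis using g gg False signS[OF h, of k] by (simp add: Gphi_def cl_simps)
  qed
qed

lemma phiPQ: "int j \<le> l \<Longrightarrow> clT (phi (Pe r j k)) = tv r (int j) k \<and>
   clT (phi (Qe r j k)) \<otimes>\<^bsub>RT\<^esub> tv r (int j) k = \<one>\<^bsub>RT\<^esub>"
proof (induction j)
  case 0 thus ?case by (simp add: cl_simps tT_def)
next
  case (Suc j)
  hence h: "int j + 1 \<le> l" and IH: "clT (phi (Pe r j k)) = tv r (int j) k"
    "clT (phi (Qe r j k)) \<otimes>\<^bsub>RT\<^esub> tv r (int j) k = \<one>\<^bsub>RT\<^esub>" by simp_all
  have gs: "(r, 2 * int j + 1, k) \<in> gens_S r l" using h r2 by (simp add: gens_S_iff)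
  have i: "int (Suc j) = int j + 1" by simp
  have G: "clT (Gphi r l (r, 2 * int j + 1, k)) = tv r (int j) k \<otimes>\<^bsub>RT\<^esub> tv r (int j + 1) k"
    using gs by (simp add: Gphi_def G0_def cl_simps div_helpers add.commute)
  have I: "clT (Iphi r l (r, 2 * int j + 1, k)) = iv (int j) k \<otimes>\<^bsub>RT\<^esub> iv (int j + 1) k"
    using gs by (simp add: Iphi_def I0_def cl_simps div_helpers add.commute)
  have t1: "tv r (int j) k \<otimes>\<^bsub>RT\<^esub> iv (int j) k = \<one>\<^bsub>RT\<^esub>" using h by (intro T_iT) auto
  have t2: "tv r (int j + 1) k \<otimes>\<^bsub>RT\<^esub> iv (int j + 1) k = \<one>\<^bsub>RT\<^esub>" using h by (intro T_iT) auto
  have "clT (phi (Pe r (Suc j) k)) = tv r (int j + 1) k \<otimes>\<^bsub>RT\<^esub> (clT (phi (Qe r j k)) \<otimes>\<^bsub>RT\<^esub> tv r (int j) k)"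
    unfolding Pe.simps hmap.simps cl_RMul G by (insert clT_carr, algebra)
  also have "\<dots> = tv r (int j + 1) k" using IH(2) by simp
  finally have P: "clT (phi (Pe r (Suc j) k)) = tv r (int (Suc j)) k" unfolding i .
  have "clT (phi (Qe r (Suc j) k)) \<otimes>\<^bsub>RT\<^esub> tv r (int j + 1) k =
     (tv r (int j) k \<otimes>\<^bsub>RT\<^esub> iv (int j) k) \<otimes>\<^bsub>RT\<^esub> (tv r (int j + 1) k \<otimes>\<^bsub>RT\<^esub> iv (int j + 1) k)"
    unfolding Qe.simps hmap.simps cl_RMul I IH(1) by (insert clT_carr, algebra)
  also have "\<dots> = \<one>\<^bsub>RT\<^esub>" using t1 t2 by simp
  finally show ?case using P unfolding i by simp
qed

lemma RT2: "g \<in> gens_T r l \<Longrightarrow> clT (phi (Gpsi r l g)) = clT (RGen g)"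
proof -
  assume g: "g \<in> gens_T r l"
  obtain a m k where gg: "g = (a, m, k)" by (cases g)
  show ?thesis
  proof (cases "a = r")
    case True
    hence h: "1 \<le> m" "m \<le> l" using g gg r2 by (auto simp: gens_T_def)
    have "clT (phi (Pe r (nat m) k)) = tv r m k" using phiPQ[of "nat m" k] h by simp
    thus ?thesis using g gg True h r2 by (simp add: Gpsi_def tv_gen)
  next
    case False
    hence h: "1 \<le> a" "a \<le> r - 1" "1 \<le> m" "m \<le> 2*l - 1" using g gg by (auto simp: gens_T_def)
    hence "(a, m, k) \<in> gens_S r l" by (simp add: gens_S_iff)
    thus ?thesis using g gg False h by (simp add: Gpsi_def Gphi_def G0_def tv_gen)
  qed
qed

lemma comp_resp1: "pcong (gens_S r l) (gens_S r l) (rels_S r l) e f \<Longrightarrow> clS (psi (phi e)) = clS (psi (phi f))"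
  by (simp add: pc_eq_iff psi_resp phi_resp)
lemma comp_resp2: "pcong (gens_T r l) (invs_T r l) (rels_T r l) e f \<Longrightarrow> clT (phi (psi e)) = clT (phi (psi f))"
  by (simp add: pc_eq_iff psi_resp phi_resp)

lemma RTS: "clS (psi (phi e)) = clS e"
proof (induction e)
  case (RGen g)
  show ?case
  proof (cases "g \<in> gens_S r l")
    case True thus ?thesis by (simp add: RT1)
  next
    case False
    hence "clS (RGen g) = clS RZero" by (simp add: pc_eq_iff rc_nongen)
    thus ?thesis using False by (cases g) (simp add: Gphi_def)
  qed
next
  case (RInv g)
  show ?case
  proof (cases "g \<in> gens_S r l")
    case True
    define X where "X = clS (psi (phi (RInv g)))"
    have "pcong (gens_S r l) (gens_S r l) (rels_S r l) (RMul (RInv g) (RGen g)) ROne"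
      using True by (meson rc_inv rc_mul_comm rc_trans)
    from comp_resp1[OF this] have "X \<otimes>\<^bsub>RS\<^esub> clS (RGen g) = \<one>\<^bsub>RS\<^esub>"
      using RT1[OF True] unfolding X_def by (simp add: cl_simps)
    moreover have GI: "clS (RGen g) \<otimes>\<^bsub>RS\<^esub> clS (RInv g) = \<one>\<^bsub>RS\<^esub>" using True by (rule S_inv)
    moreover have "X = (X \<otimes>\<^bsub>RS\<^esub> clS (RGen g)) \<otimes>\<^bsub>RS\<^esub> clS (RInv g)"
    proof -
      have "X = X \<otimes>\<^bsub>RS\<^esub> (clS (RGen g) \<otimes>\<^bsub>RS\<^esub> clS (RInv g))" unfolding GI X_def by simp
      also have "\<dots> = (X \<otimes>\<^bsub>RS\<^esub> clS (RGen g)) \<otimes>\<^bsub>RS\<^esub> clS (RInv g)" unfolding X_def by (insert clS_carr, algebra)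
      finally show ?thesis .
    qed
    ultimately show ?thesis unfolding X_def by simp
  next
    case False
    hence "clS (RInv g) = clS RZero" by (simp add: pc_eq_iff rc_noninv)
    thus ?thesis using False by (cases g) (simp add: Iphi_def)
  qed
qed (simp_all add: cl_simps)

lemma RTT: "clT (phi (psi e)) = clT e"
proof (induction e)
  case (RGen g)
  show ?case
  proof (cases "g \<in> gens_T r l")
    case True thus ?thesis by (simp add: RT2)
  next
    case False
    hence "clT (RGen g) = clT RZero" by (simp add: pc_eq_iff rc_nongen)
    thus ?thesis using False by (cases g) (simp add: Gpsi_def)
  qed
next
  case (RInv g)
  show ?case
  proof (cases "g \<in> invs_T r l")
    case True
    have Tg: "g \<in> gens_T r l" using True by (cases g) (auto simp: invs_T_def gens_T_def)
    define X where "X = clT (phi (psi (RInv g)))"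
    have "pcong (gens_T r l) (invs_T r l) (rels_T r l) (RMul (RInv g) (RGen g)) ROne"
      using True by (meson rc_inv rc_mul_comm rc_trans)
    from comp_resp2[OF this] have "X \<otimes>\<^bsub>RT\<^esub> clT (RGen g) = \<one>\<^bsub>RT\<^esub>"
      using RT2[OF Tg] unfolding X_def by (simp add: cl_simps)
    moreover have GI: "clT (RGen g) \<otimes>\<^bsub>RT\<^esub> clT (RInv g) = \<one>\<^bsub>RT\<^esub>" using True by (rule cl_inv)
    moreover have "X = (X \<otimes>\<^bsub>RT\<^esub> clT (RGen g)) \<otimes>\<^bsub>RT\<^esub> clT (RInv g)"
    proof -
      have "X = X \<otimes>\<^bsub>RT\<^esub> (clT (RGen g) \<otimes>\<^bsub>RT\<^esub> clT (RInv g))" unfolding GI X_def by simp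
      also have "\<dots> = (X \<otimes>\<^bsub>RT\<^esub> clT (RGen g)) \<otimes>\<^bsub>RT\<^esub> clT (RInv g)" unfolding X_def by (insert clT_carr, algebra)
      finally show ?thesis .
    qed
    ultimately show ?thesis unfolding X_def by simp
  next
    case False
    hence "clT (RInv g) = clT RZero" by (simp add: pc_eq_iff rc_noninv)
    thus ?thesis using False by (cases g) (simp add: Ipsi_def)
  qed
qed (simp_all add: cl_simps)

definition rho where "rho X = clT (phi (rrep X))"

lemma rho_cl: "rho (clS e) = clT (phi e)"
  unfolding rho_def using phi_resp[OF rrep_cl[of "gens_S r l" "gens_S r l" "rels_S r l" e]]
  by (simp add: pc_eq_iff[symmetric])

lemma rho_iso: "rho \<in> ring_iso (ring_S r l) (ring_T r l)"
proof -
  have cS: "carrier (ring_S r l) = range clS" by (simp add: ring_S_def pr_carrier)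
  have cT: "carrier (ring_T r l) = range clT" by (simp add: ring_T_def pr_carrier)
  have hom: "rho \<in> ring_hom (ring_S r l) (ring_T r l)"
  proof (rule ring_hom_memI)
    fix x assume "x \<in> carrier (ring_S r l)" thus "rho x \<in> carrier (ring_T r l)" by (auto simp: cS cT rho_cl)
  next
    fix x y assume "x \<in> carrier (ring_S r l)" "y \<in> carrier (ring_S r l)"
    then obtain e f where "x = clS e" "y = clS f" by (auto simp: cS)
    thus "rho (x \<otimes>\<^bsub>ring_S r l\<^esub> y) = rho x \<otimes>\<^bsub>ring_T r l\<^esub> rho y"
      and "rho (x \<oplus>\<^bsub>ring_S r l\<^esub> y) = rho x \<oplus>\<^bsub>ring_T r l\<^esub> rho y"
      by (simp_all add: ring_S_def ring_T_def rho_cl pr_mult pr_add)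
  next
    show "rho \<one>\<^bsub>ring_S r l\<^esub> = \<one>\<^bsub>ring_T r l\<^esub>"
      by (simp add: ring_S_def ring_T_def pr_one rho_cl)
  qed
  have inj: "inj_on rho (carrier (ring_S r l))"
  proof (rule inj_onI)
    fix x y assume "x \<in> carrier (ring_S r l)" "y \<in> carrier (ring_S r l)" "rho x = rho y"
    then obtain e f where ef: "x = clS e" "y = clS f" "clT (phi e) = clT (phi f)" by (auto simp: cS rho_cl)
    hence "clS (psi (phi e)) = clS (psi (phi f))" by (simp add: pc_eq_iff psi_resp)
    thus "x = y" using ef by (simp add: RTS)
  qed
  have img: "rho ` carrier (ring_S r l) = carrier (ring_T r l)"
  proof
    show "rho ` carrier (ring_S r l) \<subseteq> carrier (ring_T r l)" by (auto simp: cS cT rho_cl)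
  next
    show "carrier (ring_T r l) \<subseteq> rho ` carrier (ring_S r l)"
    proof
      fix y assume "y \<in> carrier (ring_T r l)"
      then obtain e where "y = clT e" by (auto simp: cT)
      hence "y = rho (clS (psi e))" by (simp add: rho_cl RTT)
      thus "y \<in> rho ` carrier (ring_S r l)" by (auto simp: cS)
    qed
  qed
  show ?thesis using hom inj img by (simp add: ring_iso_def bij_betw_def)
qed

end


theorem proposition6p8:
  fixes r l :: int
  assumes "r \<ge> 2" and "l \<ge> 2"
  shows "\<exists>\<rho>. \<rho> \<in> ring_iso (ring_S r l) (ring_T r l)
    \<and> (\<forall>a m k. 1 \<le> a \<and> a \<le> r - 1 \<and> 1 \<le> m \<and> m \<le> 2*l - 1 \<longrightarrow>
          \<rho> (cls_S r l (RGen (a, m, k))) = cls_T r l (tT r l a m k))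
    \<and> (\<forall>m k. 1 \<le> m \<and> m \<le> l - 1 \<longrightarrow>
          \<rho> (cls_S r l (RGen (r, 2*m, k)))
            = cls_T r l (RMul (tT r l r m (k-1)) (tT r l r m (k+1))))
    \<and> (\<forall>m k. 0 \<le> m \<and> m \<le> l - 1 \<longrightarrow>
          \<rho> (cls_S r l (RGen (r, 2*m+1, k)))
            = cls_T r l (RMul (tT r l r m k) (tT r l r (m+1) k)))
    \<and> (\<forall>m k. 1 \<le> m \<and> m \<le> l - 1 \<longrightarrow>
          \<rho> (cls_S r l (RGen (r+1, 2*m, k)))
            = cls_T r l (RMul (tT r l r m k) (tT r l r m k)))
    \<and> (\<forall>a m k. r + 2 \<le> a \<and> a \<le> 2*r + 1 \<and> 1 \<le> m \<and> m \<le> 2*l - 1 \<longrightarrow>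
          \<rho> (cls_S r l (RGen (a, m, k)))
            = (if even m then \<rho> (cls_S r l (RGen (2*r + 2 - a, m, k)))
               else \<ominus>\<^bsub>ring_T r l\<^esub> \<rho> (cls_S r l (RGen (2*r + 2 - a, m, k)))))"
proof -
  interpret P68 r l using assms by unfold_locales
  have c5: "rho (cls_S r l (RGen (a, m, k)))
            = (if even m then rho (cls_S r l (RGen (2*r + 2 - a, m, k)))
               else \<ominus>\<^bsub>ring_T r l\<^esub> rho (cls_S r l (RGen (2*r + 2 - a, m, k))))"
    if h: "r + 2 \<le> a" "a \<le> 2*r + 1" "1 \<le> m" "m \<le> 2*l - 1" for a m k
  proof -
    have g1: "(a, m, k) \<in> gens_S r l" "(2*r+2-a, m, k) \<in> gens_S r l" using h by (auto simp: gens_S_iff)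
    have e1: "rho (cls_S r l (RGen (a, m, k))) = clT (rsign m) \<otimes>\<^bsub>RT\<^esub> clT (G0 r l (2*r+2-a) m k)"
      using g1 h by (simp add: cls_S_def rho_cl Gphi_def cl_simps)
    have e2: "rho (cls_S r l (RGen (2*r+2-a, m, k))) = clT (G0 r l (2*r+2-a) m k)"
      using g1 h by (simp add: cls_S_def rho_cl Gphi_def)
    show ?thesis
      using e1 e2 by (cases "even m") (simp_all add: sgnT_even sgnT_odd ring_T_def T.l_minus)
  qed
  show ?thesis
  proof (intro exI[of _ rho] conjI allI impI)
    show "rho \<in> ring_iso (ring_S r l) (ring_T r l)" by (rule rho_iso)
  next
    fix a m k assume h: "1 \<le> a \<and> a \<le> r - 1 \<and> 1 \<le> m \<and> m \<le> 2*l - 1"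
    thus "rho (cls_S r l (RGen (a, m, k))) = cls_T r l (tT r l a m k)"
      by (simp add: cls_S_def cls_T_def rho_cl Gphi_def G0_def gens_S_iff)
  next
    fix m k assume h: "1 \<le> m \<and> m \<le> l - 1"
    thus "rho (cls_S r l (RGen (r, 2*m, k))) = cls_T r l (RMul (tT r l r m (k-1)) (tT r l r m (k+1)))"
      using r2 by (simp add: cls_S_def cls_T_def rho_cl Gphi_def G0_def gens_S_iff div_helpers add.commute)
  next
    fix m k assume h: "0 \<le> m \<and> m \<le> l - 1"
    thus "rho (cls_S r l (RGen (r, 2*m+1, k))) = cls_T r l (RMul (tT r l r m k) (tT r l r (m+1) k))"
      using r2 by (simp add: cls_S_def cls_T_def rho_cl Gphi_def G0_def gens_S_iff div_helpers add.commute)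
  next
    fix m k assume h: "1 \<le> m \<and> m \<le> l - 1"
    thus "rho (cls_S r l (RGen (r+1, 2*m, k))) = cls_T r l (RMul (tT r l r m k) (tT r l r m k))"
      using r2 by (simp add: cls_S_def cls_T_def rho_cl Gphi_def G0_def gens_S_iff div_helpers)
  next
    fix a m k assume h: "r + 2 \<le> a \<and> a \<le> 2*r + 1 \<and> 1 \<le> m \<and> m \<le> 2*l - 1"
    thus "rho (cls_S r l (RGen (a, m, k)))
            = (if even m then rho (cls_S r l (RGen (2*r + 2 - a, m, k)))
               else \<ominus>\<^bsub>ring_T r l\<^esub> rho (cls_S r l (RGen (2*r + 2 - a, m, k))))"
      using c5 by blast
  qed
qed


end
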